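(* Suppose $u$ and $v$ are vertices of $G$ such that $u$ is an ancestor or a descendant of $v$ in $T$. Then, when routing from $u$ to $v$, the routing algorithm reaches $v$ after traversing $O(\log n)$ edges.
   Context: Let $T$ be a rooted tree on $n$ vertices with positive edge weights; $\delta_T(a,b)$ is the weight of the path in $T$ from $a$ to $b$. Ancestor/descendant refer to $T$, and a vertex counts as its own ancestor and descendant; "deepest"/"highest" refer to depth in $T$. $T_v$ is the subtree of $T$ rooted at $v$. For every non-leaf vertex $v$ fix a child $c_1(v)$ with $|T_{c_1(v)}|$ maximal; edges $(v,c_1(v))$ are leftmost. A subtree $R$ of $T$ is rooted at its vertex closest to the root, $rt(R)$, and inherits the leftmost labelling; $R_v$ is the subtree of $R$ rooted at $v$. $P_R(v)$ is the longest downward path from $v$ in $R$ using only leftmost edges, with last vertex $l(v)$; $l(R):=l(rt(R))$. A vertex $v$ of $R$ is $d$-balanced if $|R_{c_1(v)}|\le |R|-d$ (with $|R_{c_1(v)}|=0$ if $c_1(v)$ is undefined or not in $R$); $b_d(v)$ is the first $d$-balanced vertex on $P_R(v)$, or NULL. $CV(R,d)=\emptyset$ if $b_d(rt(R))$ is NULL, else $\{b\}\cup\bigcup_w CV(R_w,d)$ with $b=b_d(rt(R))$ and $w$ ranging over children of $b$ in $R$. Fix an integer $k\ge4$; for a subtree $R$ with $m$ vertices, $C_R=V(R)$ if $k\ge m/2-1$, else $C_R=CV(R,m/k)\cup\{l(R),rt(R)\}$. Canonical subtrees: $T$ is canonical; if $R$ is canonical, each component of $R$ minus $C_R$ is canonical.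 Each vertex $v$ lies in $C_R$ for exactly one canonical $R$, denoted $T^v$. The spanner $G$ has vertex set $V(T)$ and edges: all edges of $T$, and all pairs of distinct vertices of $C_R$ for every canonical $R$; edge $(a,b)$ has weight $\delta_T(a,b)$. Routing algorithm from current vertex $u$ to destination $v$, repeated until $v$ is reached: Case 0: if $v$ is adjacent to $u$, move to $v$. Case 1: $u$ is an ancestor of $v$; let $X$ be the vertices of $C_{T^u}$ that are ancestors of $v$, $x$ the deepest; move to $x$, then to the child of $x$ that is an ancestor of $v$. Case 2: $u$ is a descendant of $v$; let $X$ be the vertices of $C_{T^u}$ that are descendants of $v$ and ancestors of $u$, $x$ the highest; move to $x$, then to the parent of $x$. Case 3: $u$ is neither; let $X$ be the vertices of $C_{T^u}$ that are ancestors of $v$ but not of $u$, and $Y$ those that are ancestors of $u$ but not of $v$, $y$ the highest vertex of $Y$. Case 3 a): $X=\emptyset$: move to $y$, then to the parent of $y$. Case 3 b): $X\neq\emptyset$: with $x$ the deepest vertex of $X$ and $x'$ the child of $x$ that is an ancestor of $v$, move to $x$, then to $x'$. (Moving to the current vertex means staying.) *)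

theory Defs
  imports Main "HOL.Transcendental"
begin

text \<open>A rooted tree on a finite vertex set of naturals, given by a parent function,
  together with a fixed choice of a heaviest child (the leftmost child) for each
  non-leaf vertex.\<close>

record rtree =
  verts :: "nat set"
  root :: nat
  parent :: "nat \<Rightarrow> nat"
  lc :: "nat \<Rightarrow> nat"

inductive anc :: "rtree \<Rightarrow> nat \<Rightarrow> nat \<Rightarrow> bool" for T where
  anc_refl: "v \<in> verts T \<Longrightarrow> anc T v v"
| anc_step: "w \<in> verts T \<Longrightarrow> w \<noteq> root T \<Longrightarrow> anc T x (parent T w) \<Longrightarrow> anc T x w"

definition is_tree :: "rtree \<Rightarrow> bool" where
  "is_tree T \<longleftrightarrow> finite (verts T) \<and> root T \<in> verts T
     \<and> (\<forall>v \<in> verts T - {root T}. parent T v \<in> verts T)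
     \<and> (\<forall>v \<in> verts T. anc T (root T) v)"

definition children :: "rtree \<Rightarrow> nat \<Rightarrow> nat set" where
  "children T x = {w \<in> verts T. w \<noteq> root T \<and> parent T w = x}"

definition Tsub :: "rtree \<Rightarrow> nat \<Rightarrow> nat set" where
  "Tsub T x = {w. anc T x w}"

definition valid_lc :: "rtree \<Rightarrow> bool" where
  "valid_lc T \<longleftrightarrow> (\<forall>v \<in> verts T. children T v \<noteq> {} \<longrightarrow>
      lc T v \<in> children T v \<and>
      (\<forall>w \<in> children T v. card (Tsub T w) \<le> card (Tsub T (lc T v))))"

definition tadj :: "rtree \<Rightarrow> nat \<Rightarrow> nat \<Rightarrow> bool" where
  "tadj T a b \<longleftrightarrow> a \<in> verts T \<and> b \<in> verts T \<and>
     ((a \<noteq> root T \<and> parent T a = b) \<or> (b \<noteq> root T \<and> parent T b = a))"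

text \<open>Subtrees R are represented by their vertex sets (connected subsets of V(T)).\<close>
definition rt :: "rtree \<Rightarrow> nat set \<Rightarrow> nat" where
  "rt T R = (THE x. x \<in> R \<and> (x = root T \<or> parent T x \<notin> R))"

definition Rsub :: "rtree \<Rightarrow> nat set \<Rightarrow> nat \<Rightarrow> nat set" where
  "Rsub T R v = {w \<in> R. anc T v w}"

definition has_lc :: "rtree \<Rightarrow> nat set \<Rightarrow> nat \<Rightarrow> bool" where
  "has_lc T R w \<longleftrightarrow> children T w \<noteq> {} \<and> lc T w \<in> R"

definition lcsize :: "rtree \<Rightarrow> nat set \<Rightarrow> nat \<Rightarrow> nat" where
  "lcsize T R w = (if has_lc T R w then card (Rsub T R (lc T w)) else 0)"

definition balanced :: "rtree \<Rightarrow> nat set \<Rightarrow> real \<Rightarrow> nat \<Rightarrow> bool" where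
  "balanced T R d w \<longleftrightarrow> real (lcsize T R w) \<le> real (card R) - d"

inductive onP :: "rtree \<Rightarrow> nat set \<Rightarrow> nat \<Rightarrow> nat \<Rightarrow> bool" for T R v where
  onP_start: "v \<in> R \<Longrightarrow> onP T R v v"
| onP_next: "onP T R v w \<Longrightarrow> has_lc T R w \<Longrightarrow> onP T R v (lc T w)"

definition lend :: "rtree \<Rightarrow> nat set \<Rightarrow> nat \<Rightarrow> nat" where
  "lend T R v = (THE w. onP T R v w \<and> \<not> has_lc T R w)"

definition bfirst :: "rtree \<Rightarrow> nat set \<Rightarrow> real \<Rightarrow> nat \<Rightarrow> nat option" where
  "bfirst T R d v =
    (if \<exists>w. onP T R v w \<and> balanced T R d w
     then Some (THE w. onP T R v w \<and> balanced T R d w \<and>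
                  (\<forall>w'. onP T R v w' \<and> balanced T R d w' \<longrightarrow> anc T w w'))
     else None)"

inductive cv :: "rtree \<Rightarrow> real \<Rightarrow> nat set \<Rightarrow> nat \<Rightarrow> bool" for T d where
  cv_here: "bfirst T R d (rt T R) = Some b \<Longrightarrow> cv T d R b"
| cv_rec: "bfirst T R d (rt T R) = Some b \<Longrightarrow> w \<in> R \<Longrightarrow> w \<in> children T b \<Longrightarrow>
           cv T d (Rsub T R w) x \<Longrightarrow> cv T d R x"

definition Cset :: "rtree \<Rightarrow> nat \<Rightarrow> nat set \<Rightarrow> nat set" where
  "Cset T k R = (let m = card R in
     if real k \<ge> real m / 2 - 1 then R
     else {x. cv T (real m / real k) R x} \<union> {lend T R (rt T R), rt T R})"

definition comp :: "rtree \<Rightarrow> nat set \<Rightarrow> nat \<Rightarrow> nat set" where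
  "comp T A x = {y. (\<lambda>a b. a \<in> A \<and> b \<in> A \<and> tadj T a b)\<^sup>*\<^sup>* x y}"

inductive canon :: "rtree \<Rightarrow> nat \<Rightarrow> nat set \<Rightarrow> bool" for T k where
  canon_T: "canon T k (verts T)"
| canon_comp: "canon T k R \<Longrightarrow> x \<in> R - Cset T k R \<Longrightarrow> canon T k (comp T (R - Cset T k R) x)"

definition Tof :: "rtree \<Rightarrow> nat \<Rightarrow> nat \<Rightarrow> nat set" where
  "Tof T k u = (THE R. canon T k R \<and> u \<in> Cset T k R)"

definition Gadj :: "rtree \<Rightarrow> nat \<Rightarrow> nat \<Rightarrow> nat \<Rightarrow> bool" where
  "Gadj T k a b \<longleftrightarrow> a \<noteq> b \<and>
     (tadj T a b \<or> (\<exists>R. canon T k R \<and> a \<in> Cset T k R \<and> b \<in> Cset T k R))"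

definition deepest :: "rtree \<Rightarrow> nat set \<Rightarrow> nat" where
  "deepest T X = (THE x. x \<in> X \<and> (\<forall>y \<in> X. anc T y x))"

definition highest :: "rtree \<Rightarrow> nat set \<Rightarrow> nat" where
  "highest T X = (THE x. x \<in> X \<and> (\<forall>y \<in> X. anc T x y))"

definition child_toward :: "rtree \<Rightarrow> nat \<Rightarrow> nat \<Rightarrow> nat" where
  "child_toward T x v = (THE c. c \<in> children T x \<and> anc T c v)"

text \<open>One iteration of the routing algorithm from current vertex u towards v:
  returns (first vertex moved to, second vertex moved to).\<close>
definition route_step :: "rtree \<Rightarrow> nat \<Rightarrow> nat \<Rightarrow> nat \<Rightarrow> nat \<times> nat" where
  "route_step T k v u =
    (if u = v then (u, u)
     else if Gadj T k u v then (v, v)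
     else let C = Cset T k (Tof T k u) in
       if anc T u v then
         (let x = deepest T {x \<in> C. anc T x v} in (x, child_toward T x v))
       else if anc T v u then
         (let x = highest T {x \<in> C. anc T v x \<and> anc T x u} in (x, parent T x))
       else
         (let X = {x \<in> C. anc T x v \<and> \<not> anc T x u};
              Y = {y \<in> C. anc T y u \<and> \<not> anc T y v} in
          if X = {} then (let y = highest T Y in (y, parent T y))
          else (let x = deepest T X in (x, child_toward T x v))))"

text \<open>Number of edges traversed in one iteration (moving to the current vertex is staying).\<close>
definition step_cost :: "rtree \<Rightarrow> nat \<Rightarrow> nat \<Rightarrow> nat \<Rightarrow> nat" where
  "step_cost T k v u = (case route_step T k v u of (x, y) \<Rightarrow>
     (if x \<noteq> u then 1 else 0) + (if y \<noteq> x then 1 else 0))"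

definition route_pos :: "rtree \<Rightarrow> nat \<Rightarrow> nat \<Rightarrow> nat \<Rightarrow> nat \<Rightarrow> nat" where
  "route_pos T k u v i = ((\<lambda>w. snd (route_step T k v w)) ^^ i) u"

end

theory Submission
  imports Defs
begin
lemma anc_verts: "anc T x w \<Longrightarrow> x \<in> verts T \<and> w \<in> verts T"
  by (induction rule: anc.induct) auto

lemma anc_trans: "anc T b c \<Longrightarrow> anc T a b \<Longrightarrow> anc T a c"
  by (induction rule: anc.induct) (auto intro: anc.intros)

lemma anc_parent: "w \<in> verts T \<Longrightarrow> w \<noteq> root T \<Longrightarrow> parent T w \<in> verts T \<Longrightarrow> anc T (parent T w) w"
  by (auto intro: anc.intros)

lemma anc_root_only: "anc T a (root T) \<Longrightarrow> a = root T"
  by (auto elim: anc.cases)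

lemma anc_cases2: "anc T a w \<Longrightarrow> a = w \<or> (w \<noteq> root T \<and> anc T a (parent T w))"
  by (cases rule: anc.cases) auto

lemma anc_comparable: "anc T a w \<Longrightarrow> anc T b w \<Longrightarrow> anc T a b \<or> anc T b a"
proof (induction arbitrary: b rule: anc.induct)
  case (anc_refl v) then show ?case by auto
next
  case (anc_step w x)
  from anc_step.prems have "b = w \<or> anc T b (parent T w)" using anc_cases2 by blast
  then show ?case
  proof
    assume "b = w" then show ?thesis using anc_step by (auto intro: anc.intros)
  next
    assume "anc T b (parent T w)" then show ?thesis using anc_step.IH by blast
  qed
qed

lemma anc_funpow: "anc T x w \<Longrightarrow> \<exists>n. (parent T ^^ n) w = x \<and> (\<forall>i<n. (parent T ^^ i) w \<noteq> root T)"
proof (induction rule: anc.induct)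
  case (anc_refl v) then show ?case by (intro exI[of _ 0]) auto
next
  case (anc_step w x)
  then obtain m where m: "(parent T ^^ m) (parent T w) = x" "\<forall>i<m. (parent T ^^ i) (parent T w) \<noteq> root T" by blast
  show ?case
  proof (intro exI[of _ "Suc m"] conjI allI impI)
    show "(parent T ^^ Suc m) w = x" using m by (simp add: funpow_Suc_right del: funpow.simps)
    fix i assume "i < Suc m"
    then show "(parent T ^^ i) w \<noteq> root T" using m anc_step
      by (cases i) (auto simp: funpow_Suc_right simp del: funpow.simps)
  qed
qed

definition depth :: "rtree \<Rightarrow> nat \<Rightarrow> nat" where
  "depth T w = (LEAST n. (parent T ^^ n) w = root T)"

locale tree =
  fixes T :: rtree
  assumes tree: "is_tree T"
begin

lemma fin: "finite (verts T)" using tree by (simp add: is_tree_def)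
lemma root_in: "root T \<in> verts T" using tree by (simp add: is_tree_def)
lemma parent_in: "v \<in> verts T \<Longrightarrow> v \<noteq> root T \<Longrightarrow> parent T v \<in> verts T" using tree by (simp add: is_tree_def)
lemma anc_root: "v \<in> verts T \<Longrightarrow> anc T (root T) v" using tree by (simp add: is_tree_def)

lemma depth_anc:
  assumes "anc T x w"
  obtains n where "(parent T ^^ n) w = x" "n \<le> depth T w" "depth T x = depth T w - n"
proof -
  from anc_funpow[OF assms] obtain n where n: "(parent T ^^ n) w = x" "\<forall>i<n. (parent T ^^ i) w \<noteq> root T" by blast
  have wv: "w \<in> verts T" using anc_verts assms by blast
  from anc_funpow[OF anc_root[OF wv]] obtain h where h: "(parent T ^^ h) w = root T" "\<forall>i<h. (parent T ^^ i) w \<noteq> root T" by blast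
  have dw: "depth T w = h" unfolding depth_def
    by (rule Least_equality) (use h in \<open>auto intro: leI\<close>)
  have nh: "n \<le> h" proof (rule ccontr) assume "\<not> n \<le> h" then have "h < n" by simp then show False using n(2) h(1) by blast qed
  have "(parent T ^^ (h - n)) x = root T"
  proof -
    have "h = (h - n) + n" using nh by simp
    then have "(parent T ^^ h) w = (parent T ^^ (h - n)) ((parent T ^^ n) w)" by (metis funpow_add comp_apply)
    then show ?thesis using n(1) h(1) by simp
  qed
  moreover have "\<forall>i<h-n. (parent T ^^ i) x \<noteq> root T"
  proof (intro allI impI)
    fix i assume "i < h - n"
    then have "i + n < h" by auto
    then have "(parent T ^^ (i + n)) w \<noteq> root T" using h(2) by blast
    then show "(parent T ^^ i) x \<noteq> root T" using n(1) by (simp add: funpow_add)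
  qed
  ultimately have "depth T x = h - n" unfolding depth_def
    by (intro Least_equality) (auto intro: leI)
  then show ?thesis using that n nh dw by auto
qed

lemma anc_depth_le: "anc T x w \<Longrightarrow> depth T x \<le> depth T w"
proof -
  assume a: "anc T x w"
  obtain n where n: "(parent T ^^ n) w = x" "n \<le> depth T w" "depth T x = depth T w - n"
    by (rule depth_anc[OF a(1)])
  then show ?thesis by simp
qed

lemma anc_depth_eq: "anc T x w \<Longrightarrow> depth T x = depth T w \<Longrightarrow> x = w"
proof -
  assume a: "anc T x w" "depth T x = depth T w"
  obtain n where n: "(parent T ^^ n) w = x" "n \<le> depth T w" "depth T x = depth T w - n"
    by (rule depth_anc[OF a(1)])
  have "n = 0" using n(2,3) a(2) by linarith
  then show ?thesis using n(1) by simp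
qed

lemma anc_antisym: "anc T x w \<Longrightarrow> anc T w x \<Longrightarrow> x = w"
  using anc_depth_le anc_depth_eq by (meson le_antisym)

lemma depth_char: "(parent T ^^ h) w = root T \<Longrightarrow> \<forall>i<h. (parent T ^^ i) w \<noteq> root T \<Longrightarrow> depth T w = h"
  unfolding depth_def by (rule Least_equality) (auto intro: leI)

lemma depth_parent: "w \<in> verts T \<Longrightarrow> w \<noteq> root T \<Longrightarrow> depth T w = Suc (depth T (parent T w))"
proof -
  assume a: "w \<in> verts T" "w \<noteq> root T"
  from anc_funpow[OF anc_root[OF a(1)]] obtain h where h: "(parent T ^^ h) w = root T" "\<forall>i<h. (parent T ^^ i) w \<noteq> root T" by blast
  have dw: "depth T w = h" by (rule depth_char[OF h])
  have "h \<noteq> 0" proof assume "h = 0" then show False using h(1) a(2) by simp qed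
  then obtain g where g: "h = Suc g" by (cases h) auto
  have "(parent T ^^ g) (parent T w) = root T" using h g by (simp add: funpow_Suc_right del: funpow.simps)
  moreover have "\<forall>i<g. (parent T ^^ i) (parent T w) \<noteq> root T"
  proof (intro allI impI)
    fix i assume "i < g" then have "Suc i < h" using g by auto
    then have "(parent T ^^ Suc i) w \<noteq> root T" using h by blast
    then show "(parent T ^^ i) (parent T w) \<noteq> root T" by (simp add: funpow_Suc_right del: funpow.simps)
  qed
  ultimately have "depth T (parent T w) = g" by (rule depth_char)
  then show ?thesis using dw g by simp
qed

lemma anc_parentI: "w \<in> verts T \<Longrightarrow> w \<noteq> root T \<Longrightarrow> anc T (parent T w) w"
  using parent_in by (auto intro: anc.intros)

lemma parent_neq: "w \<in> verts T \<Longrightarrow> w \<noteq> root T \<Longrightarrow> parent T w \<noteq> w"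
proof
  assume a: "w \<in> verts T" "w \<noteq> root T" "parent T w = w"
  have "depth T w = Suc (depth T (parent T w))" by (rule depth_parent[OF a(1,2)])
  then show False using a(3) by simp
qed

lemma anc_proper: "anc T a w \<Longrightarrow> a \<noteq> w \<Longrightarrow> w \<noteq> root T \<and> anc T a (parent T w)"
  using anc_cases2 by blast

lemma not_anc_child: "w \<in> verts T \<Longrightarrow> w \<noteq> root T \<Longrightarrow> \<not> anc T w (parent T w)"
  using anc_antisym anc_parentI parent_neq by blast

end

definition conn :: "rtree \<Rightarrow> nat set \<Rightarrow> nat \<Rightarrow> bool" where
  "conn T R r \<longleftrightarrow> r \<in> R \<and> R \<subseteq> verts T \<and> (\<forall>y\<in>R. anc T r y) \<and> (\<forall>y\<in>R. y \<noteq> r \<longrightarrow> parent T y \<in> R)"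

lemma tadj_sym: "tadj T a b \<Longrightarrow> tadj T b a"
  unfolding tadj_def by auto

lemma comp_refl: "x \<in> comp T A x"
  unfolding comp_def by auto

lemma comp_in: assumes "y \<in> comp T A x" shows "y = x \<or> y \<in> A"
proof -
  have "(\<lambda>a b. a \<in> A \<and> b \<in> A \<and> tadj T a b)\<^sup>*\<^sup>* x y" using assms unfolding comp_def by simp
  then show ?thesis by (induction rule: rtranclp_induct) auto
qed

lemma comp_sub: "x \<in> A \<Longrightarrow> comp T A x \<subseteq> A"
  using comp_in by blast

lemma comp_step: "y \<in> comp T A x \<Longrightarrow> y \<in> A \<Longrightarrow> z \<in> A \<Longrightarrow> tadj T y z \<Longrightarrow> z \<in> comp T A x"
  unfolding comp_def by (auto intro: rtranclp.rtrancl_into_rtrancl)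

lemma comp_sym: "y \<in> comp T A x \<Longrightarrow> x \<in> comp T A y"
proof -
  assume "y \<in> comp T A x"
  then have "(\<lambda>a b. a \<in> A \<and> b \<in> A \<and> tadj T a b)\<^sup>*\<^sup>* x y" unfolding comp_def by simp
  then have "(\<lambda>a b. a \<in> A \<and> b \<in> A \<and> tadj T a b)\<^sup>*\<^sup>* y x"
  proof (induction rule: rtranclp_induct)
    case base then show ?case by simp
  next
    case (step b c)
    then show ?case using tadj_sym by (metis (mono_tags, lifting) converse_rtranclp_into_rtranclp)
  qed
  then show ?thesis unfolding comp_def by simp
qed

lemma comp_trans: "y \<in> comp T A x \<Longrightarrow> z \<in> comp T A y \<Longrightarrow> z \<in> comp T A x"
  unfolding comp_def by auto

lemma comp_eq: "y \<in> comp T A x \<Longrightarrow> comp T A y = comp T A x"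
  using comp_trans comp_sym by blast

lemma comp_mono: "A \<subseteq> B \<Longrightarrow> comp T A x \<subseteq> comp T B x"
proof
  fix y assume ab: "A \<subseteq> B" and "y \<in> comp T A x"
  then have "(\<lambda>a b. a \<in> A \<and> b \<in> A \<and> tadj T a b)\<^sup>*\<^sup>* x y" unfolding comp_def by simp
  then have "(\<lambda>a b. a \<in> B \<and> b \<in> B \<and> tadj T a b)\<^sup>*\<^sup>* x y"
    by (rule rtranclp_mono[THEN predicate2D, rotated]) (use ab in auto)
  then show "y \<in> comp T B x" unfolding comp_def by simp
qed

lemma comp_closed:
  assumes "x \<in> S" "\<And>a b. a \<in> A \<Longrightarrow> a \<in> S \<Longrightarrow> b \<in> A \<Longrightarrow> tadj T a b \<Longrightarrow> b \<in> S"
  shows "comp T A x \<subseteq> S"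
proof
  fix y assume "y \<in> comp T A x"
  then have "(\<lambda>a b. a \<in> A \<and> b \<in> A \<and> tadj T a b)\<^sup>*\<^sup>* x y" unfolding comp_def by simp
  then show "y \<in> S" by (induction rule: rtranclp_induct) (use assms in auto)
qed

lemma path_in_comp: "anc T a b \<Longrightarrow> (\<forall>p. anc T a p \<and> anc T p b \<longrightarrow> p \<in> A) \<Longrightarrow> b \<in> comp T A a"
proof (induction rule: anc.induct)
  case (anc_refl v) then show ?case by (simp add: comp_refl)
next
  case (anc_step w x)
  have h: "anc T x (parent T w)" by fact
  have "parent T w \<in> comp T A x"
    using anc_step.IH anc_step.prems by (meson anc.anc_step anc_step.hyps)
  moreover have "parent T w \<in> A" using anc_step.prems h anc_step.hyps
    by (meson anc.intros anc_verts)
  moreover have "w \<in> A" using anc_step.prems h anc_step.hyps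
    by (meson anc.intros anc_verts)
  moreover have "tadj T (parent T w) w" unfolding tadj_def using anc_step.hyps anc_verts[OF h] by auto
  ultimately show ?case by (rule comp_step)
qed

context tree begin

lemma conn_verts: "conn T (verts T) (root T)"
  unfolding conn_def using root_in anc_root parent_in by auto

lemma conn_convex: "anc T p a \<Longrightarrow> conn T R r \<Longrightarrow> a \<in> R \<Longrightarrow> anc T r p \<Longrightarrow> p \<in> R"
proof (induction rule: anc.induct)
  case (anc_refl v) then show ?case by simp
next
  case (anc_step w x)
  show ?case
  proof (cases "w = r")
    case True
    then have "anc T x r" using anc_step by (auto intro: anc.intros)
    then have "x = r" using anc_step.prems(3) anc_antisym by blast
    then show ?thesis using anc_step.prems(1) unfolding conn_def by simp
  next
    case False
    then have "parent T w \<in> R" using anc_step.prems unfolding conn_def by blast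
    then show ?thesis using anc_step by blast
  qed
qed

lemma conn_rt: assumes "conn T R r" shows "rt T R = r"
  unfolding rt_def
proof (rule the_equality)
  have rR: "r \<in> R" and rv: "r \<in> verts T" using assms unfolding conn_def by auto
  show "r \<in> R \<and> (r = root T \<or> parent T r \<notin> R)"
  proof (cases "r = root T")
    case False
    have "parent T r \<notin> R"
    proof
      assume "parent T r \<in> R"
      then have "anc T r (parent T r)" using assms unfolding conn_def by blast
      then show False using not_anc_child rv False by blast
    qed
    then show ?thesis using rR by blast
  qed (use rR in auto)
next
  fix x assume x: "x \<in> R \<and> (x = root T \<or> parent T x \<notin> R)"
  show "x = r"
  proof (rule ccontr)
    assume "x \<noteq> r"
    then have "parent T x \<in> R" "anc T r x" using x assms unfolding conn_def by auto
    moreover have "x \<noteq> root T" using \<open>anc T r x\<close> \<open>x \<noteq> r\<close> anc_root_only by blast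
    ultimately show False using x by blast
  qed
qed

lemma conn_Rsub: "conn T R r \<Longrightarrow> w \<in> R \<Longrightarrow> conn T (Rsub T R w) w"
  unfolding conn_def Rsub_def
proof (intro conjI ballI impI)
  assume a: "r \<in> R \<and> R \<subseteq> verts T \<and> (\<forall>y\<in>R. anc T r y) \<and> (\<forall>y\<in>R. y \<noteq> r \<longrightarrow> parent T y \<in> R)" "w \<in> R"
  then show "w \<in> {wa \<in> R. anc T w wa}" by (auto intro: anc.intros)
  show "{wa \<in> R. anc T w wa} \<subseteq> verts T" using a by auto
  fix y assume y: "y \<in> {wa \<in> R. anc T w wa}"
  then show "anc T w y" by simp
  assume "y \<noteq> w"
  then have "y \<noteq> root T \<and> anc T w (parent T y)" using y anc_proper by blast
  moreover have "y \<noteq> r" using y a \<open>y \<noteq> w\<close> anc_antisym by blast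
  ultimately show "parent T y \<in> {wa \<in> R. anc T w wa}" using a y by auto
qed

lemma conn_in_comp: assumes "conn T R r" "R \<subseteq> A" "a \<in> R" shows "R \<subseteq> comp T A a"
proof -
  have *: "anc T r y \<Longrightarrow> conn T R r \<Longrightarrow> y \<in> R \<Longrightarrow> y \<in> comp T A r" for y r
  proof (induction rule: anc.induct)
    case (anc_refl v) then show ?case by (simp add: comp_refl)
  next
    case (anc_step w x)
    show ?case
    proof (cases "w = x")
      case True then show ?thesis by (simp add: comp_refl)
    next
      case False
      then have pw: "parent T w \<in> R" using anc_step unfolding conn_def by blast
      then have "parent T w \<in> comp T A x" using anc_step by blast
      moreover have "tadj T (parent T w) w" unfolding tadj_def using anc_step parent_in by auto
      ultimately show ?thesis using comp_step pw anc_step.prems assms(2) by blast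
    qed
  qed
  have "a \<in> comp T A r" using * assms unfolding conn_def by blast
  then have "comp T A r = comp T A a" using comp_eq by blast
  then show ?thesis using * assms unfolding conn_def by blast
qed

lemma comp_conn:
  assumes xA: "x \<in> A" and Av: "A \<subseteq> verts T"
  shows "\<exists>r. conn T (comp T A x) r"
proof -
  define K where "K = comp T A x"
  have KA: "K \<subseteq> A" unfolding K_def using comp_sub xA by blast
  have fK: "finite K" using KA Av fin by (meson finite_subset subset_trans)
  have "x \<in> K" unfolding K_def by (rule comp_refl)
  then have ne: "depth T ` K \<noteq> {}" by blast
  have "Min (depth T ` K) \<in> depth T ` K" using Min_in[OF finite_imageI[OF fK] ne] .
  then obtain r where rK: "r \<in> K" and rmin: "depth T r = Min (depth T ` K)" by auto
  have rle: "\<And>y. y \<in> K \<Longrightarrow> depth T r \<le> depth T y" unfolding rmin using Min_le[OF finite_imageI[OF fK]] by blast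
  have Kr: "K = comp T A r" using comp_eq[of r T A x] rK unfolding K_def by simp
  have main: "anc T r y \<and> (\<forall>p. anc T r p \<and> anc T p y \<longrightarrow> p \<in> K)" if "y \<in> K" for y
  proof -
    have "(\<lambda>a b. a \<in> A \<and> b \<in> A \<and> tadj T a b)\<^sup>*\<^sup>* r y" using that Kr unfolding comp_def by simp
    then show ?thesis
    proof (induction rule: rtranclp_induct)
      case base
      have "r \<in> verts T" using rK KA Av by blast
      have "anc T r r" using \<open>r \<in> verts T\<close> by (rule anc_refl)
      moreover have "\<forall>p. anc T r p \<and> anc T p r \<longrightarrow> p \<in> K"
      proof (intro allI impI)
        fix p assume "anc T r p \<and> anc T p r"
        then have "p = r" using anc_antisym by blast
        then show "p \<in> K" using rK by simp
      qed
      ultimately show ?case by blast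
    next
      case (step y z)
      have yK: "y \<in> K" using step.hyps(1) Kr unfolding comp_def by simp
      have "(\<lambda>a b. a \<in> A \<and> b \<in> A \<and> tadj T a b)\<^sup>*\<^sup>* r z" using step.hyps(1,2) by (rule rtranclp.rtrancl_into_rtrancl)
      then have zK: "z \<in> K" using Kr unfolding comp_def by simp
      have zv: "z \<in> verts T" and yv: "y \<in> verts T" using step Av by auto
      from step(2) have "(z \<noteq> root T \<and> parent T z = y) \<or> (y \<noteq> root T \<and> parent T y = z)"
        unfolding tadj_def by auto
      then show ?case
      proof
        assume c: "z \<noteq> root T \<and> parent T z = y"
        have "anc T r z" using step.IH c zv by (auto intro: anc.intros)
        moreover have "\<forall>p. anc T r p \<and> anc T p z \<longrightarrow> p \<in> K"
        proof (intro allI impI)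
          fix p assume p: "anc T r p \<and> anc T p z"
          then have "p = z \<or> anc T p (parent T z)" using anc_proper by blast
          then show "p \<in> K" using zK step.IH c p by auto
        qed
        ultimately show ?case by blast
      next
        assume c: "y \<noteq> root T \<and> parent T y = z"
        have "y \<noteq> r"
        proof
          assume "y = r"
          have "depth T y = Suc (depth T (parent T y))" using c by (intro depth_parent[OF yv]) auto
          then have "depth T r = Suc (depth T z)" using c \<open>y = r\<close> by simp
          then show False using rle[OF zK] by simp
        qed
        then have "anc T r z" using step.IH c anc_proper by blast
        moreover have "anc T z y" using c yv anc_parentI by blast
        ultimately show ?case using step.IH anc_trans by blast
      qed
    qed
  qed
  have "conn T K r" unfolding conn_def
  proof (intro conjI ballI impI)
    show "r \<in> K" by fact
    show "K \<subseteq> verts T" using KA Av by blast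
    fix y assume y: "y \<in> K"
    then show "anc T r y" using main by blast
    assume "y \<noteq> r"
    then have "y \<noteq> root T \<and> anc T r (parent T y)" using main y anc_proper by blast
    moreover have "anc T (parent T y) y" using calculation anc_parentI y KA Av by blast
    ultimately show "parent T y \<in> K" using main y by blast
  qed
  then show ?thesis unfolding K_def by blast
qed

end

lemma onP_in: "onP T R v w \<Longrightarrow> w \<in> R"
  by (induction rule: onP.induct) (auto simp: has_lc_def)

lemma onP_mono: "onP T Q v w \<Longrightarrow> Q \<subseteq> Q' \<Longrightarrow> onP T Q' v w"
proof (induction rule: onP.induct)
  case onP_start then show ?case by (auto intro: onP.intros)
next
  case (onP_next w)
  then have "has_lc T Q' w" unfolding has_lc_def by blast
  then show ?case using onP_next by (auto intro: onP.intros)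
qed

lemma onP_prev: "onP T R v w \<Longrightarrow> w \<noteq> v \<Longrightarrow> \<exists>p. onP T R v p \<and> has_lc T R p \<and> w = lc T p"
  by (induction rule: onP.induct) auto

locale vtree = tree +
  assumes vlc: "valid_lc T"
begin

lemma lc_child: "has_lc T R w \<Longrightarrow> w \<in> verts T \<Longrightarrow> lc T w \<in> verts T \<and> lc T w \<noteq> root T \<and> parent T (lc T w) = w"
  using vlc unfolding valid_lc_def has_lc_def children_def by blast

lemma lc_anc: "has_lc T R w \<Longrightarrow> w \<in> verts T \<Longrightarrow> anc T w (lc T w)"
  using lc_child by (metis anc_parentI)

lemma onP_anc: "onP T R v w \<Longrightarrow> R \<subseteq> verts T \<Longrightarrow> anc T v w"
proof (induction rule: onP.induct)
  case onP_start then show ?case by (auto intro: anc.intros)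
next
  case (onP_next w)
  then have "w \<in> verts T" using onP_in by blast
  then show ?case using onP_next lc_anc anc_trans by blast
qed

lemma onP_below:
  "onP T R v a \<Longrightarrow> R \<subseteq> verts T \<Longrightarrow> onP T R v w \<Longrightarrow> anc T w a \<Longrightarrow> a \<noteq> w \<Longrightarrow> has_lc T R w \<and> anc T (lc T w) a"
proof (induction rule: onP.induct)
  case onP_start
  then have "anc T v w" using onP_anc by blast
  then show ?case using onP_start anc_antisym by blast
next
  case (onP_next w')
  have w'v: "w' \<in> verts T" using onP_next onP_in by blast
  have c: "lc T w' \<in> verts T \<and> lc T w' \<noteq> root T \<and> parent T (lc T w') = w'" using lc_child[OF onP_next(2) w'v] .
  have "anc T w w'" using onP_next.prems(3,4) c anc_proper by metis
  show ?case
  proof (cases "w' = w")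
    case True then show ?thesis using onP_next c by (auto intro: anc.intros)
  next
    case False
    then have "has_lc T R w \<and> anc T (lc T w) w'" using onP_next \<open>anc T w w'\<close> by blast
    then show ?thesis using lc_anc[OF onP_next(2) w'v] anc_trans by blast
  qed
qed

lemma onP_chain: "onP T R v b \<Longrightarrow> onP T R v a \<Longrightarrow> R \<subseteq> verts T \<Longrightarrow> anc T a b \<or> anc T b a"
proof (induction rule: onP.induct)
  case onP_start then show ?case using onP_anc by blast
next
  case (onP_next w)
  have wv: "w \<in> verts T" using onP_next onP_in by blast
  from onP_next.IH onP_next.prems have "anc T a w \<or> anc T w a" by blast
  then show ?case
  proof
    assume "anc T a w" then show ?thesis using lc_anc[OF onP_next(2) wv] anc_trans by blast
  next
    assume h: "anc T w a"
    show ?thesis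
    proof (cases "a = w")
      case True then show ?thesis using lc_anc[OF onP_next(2) wv] by blast
    next
      case False
      then show ?thesis using onP_below[OF onP_next.prems(1,2) onP_next(1) h] by blast
    qed
  qed
qed


lemma onP_suffix:
  "onP T Q s y \<Longrightarrow> Q \<subseteq> verts T \<Longrightarrow> anc T s a \<Longrightarrow> anc T a y \<Longrightarrow> (\<forall>p. anc T a p \<and> anc T p y \<longrightarrow> p \<in> Q') \<Longrightarrow> onP T Q' a y"
proof (induction rule: onP.induct)
  case onP_start
  then have "a = s" using anc_antisym by blast
  then show ?case using onP_start by (auto intro: onP.intros anc.intros)
next
  case (onP_next w)
  have wv: "w \<in> verts T" using onP_next onP_in by blast
  have c: "lc T w \<in> verts T \<and> lc T w \<noteq> root T \<and> parent T (lc T w) = w" using lc_child[OF onP_next(2) wv] .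
  show ?case
  proof (cases "a = lc T w")
    case True
    have "lc T w \<in> Q'" using onP_next.prems c True by (auto intro: anc.intros)
    then show ?thesis using True by (auto intro: onP.intros)
  next
    case False
    then have aw: "anc T a w" using onP_next.prems(3) c anc_proper by metis
    have "\<forall>p. anc T a p \<and> anc T p w \<longrightarrow> p \<in> Q'"
      using onP_next.prems(4) lc_anc[OF onP_next(2) wv] anc_trans by blast
    then have "onP T Q' a w" using onP_next aw by blast
    moreover have "lc T w \<in> Q'" using onP_next.prems c by (auto intro: anc.intros)
    moreover have "children T w \<noteq> {}" using onP_next(2) unfolding has_lc_def by blast
    ultimately have "has_lc T Q' w" unfolding has_lc_def by blast
    then show ?thesis by (rule onP.onP_next[OF \<open>onP T Q' a w\<close>])
  qed
qed

lemma onP_depth_lc: "has_lc T R w \<Longrightarrow> w \<in> verts T \<Longrightarrow> depth T (lc T w) = Suc (depth T w)"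
  using lc_child depth_parent by metis

lemma lend_ex: assumes "R \<subseteq> verts T" "v \<in> R" shows "\<exists>w. onP T R v w \<and> \<not> has_lc T R w"
proof -
  define P where "P = {w. onP T R v w}"
  have PR: "P \<subseteq> R" unfolding P_def using onP_in by blast
  have fP: "finite P" using PR assms(1) fin by (meson finite_subset subset_trans)
  have "v \<in> P" unfolding P_def using assms by (auto intro: onP.intros)
  then have ne: "depth T ` P \<noteq> {}" by blast
  have "Max (depth T ` P) \<in> depth T ` P" using Max_in[OF finite_imageI[OF fP] ne] .
  then obtain w where wP: "w \<in> P" and wmax: "depth T w = Max (depth T ` P)" by auto
  have wle: "\<And>y. y \<in> P \<Longrightarrow> depth T y \<le> depth T w" unfolding wmax using Max_ge[OF finite_imageI[OF fP]] by blast
  have "\<not> has_lc T R w"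
  proof
    assume h: "has_lc T R w"
    then have "lc T w \<in> P" using wP unfolding P_def by (auto intro: onP.intros)
    moreover have "depth T (lc T w) = Suc (depth T w)" using onP_depth_lc[OF h] wP PR assms(1) by blast
    ultimately show False using wle by fastforce
  qed
  then show ?thesis using wP unfolding P_def by blast
qed

lemma lend_eq: assumes "R \<subseteq> verts T" "onP T R v w" "\<not> has_lc T R w" shows "lend T R v = w"
  unfolding lend_def
proof (rule the_equality)
  show "onP T R v w \<and> \<not> has_lc T R w" using assms by blast
  fix x assume x: "onP T R v x \<and> \<not> has_lc T R x"
  show "x = w"
  proof (rule ccontr)
    assume ne: "x \<noteq> w"
    from onP_chain[OF assms(2) _ assms(1)] x have "anc T x w \<or> anc T w x" by blast
    then show False
    proof
      assume "anc T x w" then show False using onP_below[OF assms(2,1)] x ne by metis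
    next
      assume "anc T w x" then show False using onP_below[of R v x w] x ne assms by metis
    qed
  qed
qed

lemma lend_prop: assumes "R \<subseteq> verts T" "v \<in> R" shows "onP T R v (lend T R v) \<and> \<not> has_lc T R (lend T R v)"
  using lend_ex[OF assms] lend_eq[OF assms(1)] by metis

lemma bfirst_Some:
  assumes "bfirst T R d v = Some b" "R \<subseteq> verts T"
  shows "onP T R v b \<and> balanced T R d b \<and> (\<forall>w'. onP T R v w' \<and> balanced T R d w' \<longrightarrow> anc T b w')"
proof -
  have ex: "\<exists>w. onP T R v w \<and> balanced T R d w" using assms(1) unfolding bfirst_def by (auto split: if_splits)
  define P where "P = {w. onP T R v w \<and> balanced T R d w}"
  have PR: "P \<subseteq> R" unfolding P_def using onP_in by blast
  have fP: "finite P" using PR assms(2) fin by (meson finite_subset subset_trans)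
  have ne: "depth T ` P \<noteq> {}" using ex unfolding P_def by blast
  have "Min (depth T ` P) \<in> depth T ` P" using Min_in[OF finite_imageI[OF fP] ne] .
  then obtain w where wP: "w \<in> P" and wmin: "depth T w = Min (depth T ` P)" by auto
  have wle: "\<And>y. y \<in> P \<Longrightarrow> depth T w \<le> depth T y" unfolding wmin using Min_le[OF finite_imageI[OF fP]] by blast
  have good: "onP T R v w \<and> balanced T R d w \<and> (\<forall>w'. onP T R v w' \<and> balanced T R d w' \<longrightarrow> anc T w w')"
  proof (intro conjI allI impI)
    show "onP T R v w" "balanced T R d w" using wP unfolding P_def by auto
    fix w' assume w': "onP T R v w' \<and> balanced T R d w'"
    then have "anc T w w' \<or> anc T w' w" using onP_chain[of R v w' w] wP assms(2) unfolding P_def by blast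
    moreover have "anc T w' w \<Longrightarrow> w' = w"
      using wle[of w'] w' anc_depth_le anc_depth_eq unfolding P_def by (metis le_antisym mem_Collect_eq)
    ultimately show "anc T w w'" by auto
  qed
  have "bfirst T R d v = Some (THE w. onP T R v w \<and> balanced T R d w \<and>
                  (\<forall>w'. onP T R v w' \<and> balanced T R d w' \<longrightarrow> anc T w w'))"
    using ex unfolding bfirst_def by simp
  moreover have "(THE w. onP T R v w \<and> balanced T R d w \<and>
                  (\<forall>w'. onP T R v w' \<and> balanced T R d w' \<longrightarrow> anc T w w')) = w"
    by (rule the_equality) (use good anc_antisym in blast)+
  ultimately show ?thesis using assms(1) good by simp
qed

lemma bfirst_None: "bfirst T R d v = None \<Longrightarrow> \<not> (\<exists>w. onP T R v w \<and> balanced T R d w)"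
  unfolding bfirst_def by (auto split: if_splits)

lemma cv_in: "cv T d R x \<Longrightarrow> R \<subseteq> verts T \<Longrightarrow> x \<in> R"
proof (induction rule: cv.induct)
  case (cv_here R b) then show ?case using bfirst_Some onP_in by blast
next
  case (cv_rec R b w x) then show ?case unfolding Rsub_def by auto
qed

end

lemma comp_restrict:
  assumes "comp T A y \<subseteq> S" "A \<inter> S \<subseteq> B"
  shows "comp T A y \<subseteq> comp T B y"
proof
  fix z assume "z \<in> comp T A y"
  then have "(\<lambda>a b. a \<in> A \<and> b \<in> A \<and> tadj T a b)\<^sup>*\<^sup>* y z" unfolding comp_def by simp
  then show "z \<in> comp T B y"
  proof (induction rule: rtranclp_induct)
    case base then show ?case by (rule comp_refl)
  next
    case (step a b)
    have "a \<in> comp T A y" using step.hyps(1) unfolding comp_def by simp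
    moreover have "b \<in> comp T A y" using step.hyps unfolding comp_def
      by (simp add: rtranclp.rtrancl_into_rtrancl)
    ultimately have "a \<in> B" "b \<in> B" using assms step.hyps(2) by auto
    then show ?case using comp_step step by blast
  qed
qed

context vtree begin

lemma child_ex: "anc T x v \<Longrightarrow> x \<noteq> v \<Longrightarrow> \<exists>c. c \<in> children T x \<and> anc T c v"
proof (induction rule: anc.induct)
  case (anc_refl v) then show ?case by simp
next
  case (anc_step w x)
  show ?case
  proof (cases "x = parent T w")
    case True
    then show ?thesis using anc_step unfolding children_def by (auto intro: anc.intros)
  next
    case False
    then obtain c where "c \<in> children T x" "anc T c (parent T w)" using anc_step by blast
    then show ?thesis using anc_step by (meson anc.anc_step)
  qed
qed

lemma children_parent: "c \<in> children T x \<Longrightarrow> c \<in> verts T \<and> c \<noteq> root T \<and> parent T c = x"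
  unfolding children_def by blast

lemma Rsub_sub: "Rsub T R w \<subseteq> R" unfolding Rsub_def by blast

lemma cv_sub: "cv T d R x \<Longrightarrow> R \<subseteq> verts T \<Longrightarrow> x \<in> R" by (rule cv_in)

lemma fin_sub: "R \<subseteq> verts T \<Longrightarrow> finite R" using fin finite_subset by blast

lemma cv_comp_size:
  "conn T Q q \<Longrightarrow> y \<in> Q \<Longrightarrow> \<not> cv T d Q y \<Longrightarrow> real (card (comp T (Q - {x. cv T d Q x}) y)) < d"
proof (induction "card Q" arbitrary: Q q y rule: less_induct)
  case less
  have Qv: "Q \<subseteq> verts T" and qQ: "q \<in> Q" using less.prems(1) unfolding conn_def by auto
  have rtQ: "rt T Q = q" using conn_rt[OF less.prems(1)] .
  have fQ: "finite Q" using fin_sub[OF Qv] .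
  define A where "A = Q - {x. cv T d Q x}"
  have yA: "y \<in> A" unfolding A_def using less.prems by blast
  have compA: "comp T A y \<subseteq> A" using comp_sub[OF yA] .
  have fA: "finite A" unfolding A_def using fQ by simp
  have fcomp: "finite (comp T A y)" using finite_subset[OF compA fA] .
  have AQ: "A \<subseteq> Q" unfolding A_def by blast
  show ?case
  proof (cases "bfirst T Q d q")
    case None
    have "onP T Q q (lend T Q q) \<and> \<not> has_lc T Q (lend T Q q)" using lend_prop[OF Qv qQ] .
    then have "\<not> balanced T Q d (lend T Q q)" using bfirst_None[OF None] by blast
    then have "real (card Q) < d" unfolding balanced_def lcsize_def
      using \<open>onP T Q q (lend T Q q) \<and> \<not> has_lc T Q (lend T Q q)\<close> by simp
    moreover have "card (comp T A y) \<le> card Q" using card_mono[OF fQ] compA AQ by blast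
    ultimately show ?thesis unfolding A_def by linarith
  next
    case (Some b)
    have bprop: "onP T Q q b \<and> balanced T Q d b \<and> (\<forall>w'. onP T Q q w' \<and> balanced T Q d w' \<longrightarrow> anc T b w')"
      using bfirst_Some[OF Some Qv] .
    have cvb: "cv T d Q b" using Some rtQ by (auto intro: cv.intros)
    have bQ: "b \<in> Q" using bprop onP_in by blast
    have bv: "b \<in> verts T" using bQ Qv by blast
    show ?thesis
    proof (cases "anc T b y")
      case True
      have "y \<noteq> b" using cvb less.prems(3) by blast
      then obtain w where w: "w \<in> children T b" "anc T w y" using child_ex True by blast
      have wc: "w \<in> verts T \<and> w \<noteq> root T \<and> parent T w = b" using children_parent[OF w(1)] .
      have qb: "anc T q b" using less.prems(1) bQ unfolding conn_def by blast
      have anc_bw: "anc T b w" using wc by (metis anc_parentI)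
      have wQ: "w \<in> Q" using conn_convex[OF w(2) less.prems(1) less.prems(2)] qb anc_bw anc_trans by blast
      define Qw where "Qw = Rsub T Q w"
      have connw: "conn T Qw w" unfolding Qw_def using conn_Rsub[OF less.prems(1) wQ] .
      have "b \<notin> Qw"
      proof
        assume "b \<in> Qw" then have "anc T w b" unfolding Qw_def Rsub_def by simp
        then show False using anc_antisym anc_bw wc parent_neq by metis
      qed
      then have "Qw \<subset> Q" using bQ Rsub_sub unfolding Qw_def by blast
      then have cardlt: "card Qw < card Q" using fQ by (rule psubset_card_mono[rotated])
      have yQw: "y \<in> Qw" unfolding Qw_def Rsub_def using w less.prems by blast
      have ncv: "\<not> cv T d Qw y" using less.prems(3) Some rtQ wQ w(1) unfolding Qw_def by (meson cv.cv_rec)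
      have IH: "real (card (comp T (Qw - {x. cv T d Qw x}) y)) < d"
        using less.hyps[OF cardlt connw yQw ncv] .
      have sub1: "comp T A y \<subseteq> Qw"
      proof (rule comp_closed)
        show "y \<in> Qw" by fact
        fix a b' assume a: "a \<in> A" "a \<in> Qw" "b' \<in> A" "tadj T a b'"
        have awa: "anc T w a" using a unfolding Qw_def Rsub_def by simp
        have b'Q: "b' \<in> Q" using a unfolding A_def by blast
        from a(4) have "(a \<noteq> root T \<and> parent T a = b') \<or> (b' \<noteq> root T \<and> parent T b' = a)"
          unfolding tadj_def by auto
        then show "b' \<in> Qw"
        proof
          assume c: "a \<noteq> root T \<and> parent T a = b'"
          have "a \<noteq> w" using c wc a(3) cvb unfolding A_def by blast
          then have "anc T w b'" using awa c anc_proper by blast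
          then show ?thesis using b'Q unfolding Qw_def Rsub_def by blast
        next
          assume c: "b' \<noteq> root T \<and> parent T b' = a"
          have "b' \<in> verts T" using b'Q Qv by blast
          then have "anc T w b'" using awa c by (auto intro: anc.intros)
          then show ?thesis using b'Q unfolding Qw_def Rsub_def by blast
        qed
      qed
      have "A \<inter> Qw \<subseteq> Qw - {x. cv T d Qw x}"
      proof
        fix a assume "a \<in> A \<inter> Qw"
        moreover have "cv T d Qw a \<Longrightarrow> cv T d Q a" using Some rtQ wQ w(1) unfolding Qw_def by (meson cv.cv_rec)
        ultimately show "a \<in> Qw - {x. cv T d Qw x}" unfolding A_def by blast
      qed
      then have "comp T A y \<subseteq> comp T (Qw - {x. cv T d Qw x}) y" using comp_restrict[OF sub1] by blast
      moreover have "finite (comp T (Qw - {x. cv T d Qw x}) y)"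
      proof -
        have "comp T (Qw - {x. cv T d Qw x}) y \<subseteq> Qw - {x. cv T d Qw x}" by (rule comp_sub) (use yQw ncv in blast)
        moreover have "finite (Qw - {x. cv T d Qw x})" using \<open>Qw \<subset> Q\<close> fQ finite_subset by blast
        ultimately show ?thesis using finite_subset by blast
      qed
      ultimately have "card (comp T A y) \<le> card (comp T (Qw - {x. cv T d Qw x}) y)" by (rule card_mono[rotated])
      then show ?thesis using IH unfolding A_def by linarith
    next
      case False
      define Qb where "Qb = Rsub T Q b"
      have sub2: "comp T A y \<subseteq> Q - Qb"
      proof (rule comp_closed)
        show "y \<in> Q - Qb" using False less.prems unfolding Qb_def Rsub_def by blast
        fix a b' assume a: "a \<in> A" "a \<in> Q - Qb" "b' \<in> A" "tadj T a b'"
        have nba: "\<not> anc T b a" using a unfolding Qb_def Rsub_def by blast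
        have b'Q: "b' \<in> Q" using a unfolding A_def by blast
        from a(4) have "(a \<noteq> root T \<and> parent T a = b') \<or> (b' \<noteq> root T \<and> parent T b' = a)"
          unfolding tadj_def by auto
        then show "b' \<in> Q - Qb"
        proof
          assume c: "a \<noteq> root T \<and> parent T a = b'"
          have "a \<in> verts T" using a Qv unfolding A_def by blast
          then have "anc T b' a" using c anc_parentI by blast
          then have "\<not> anc T b b'" using nba anc_trans by blast
          then show ?thesis using b'Q unfolding Qb_def Rsub_def by blast
        next
          assume c: "b' \<noteq> root T \<and> parent T b' = a"
          have "\<not> anc T b b'"
          proof
            assume "anc T b b'"
            moreover have "b' \<noteq> b" using a(3) cvb unfolding A_def by blast
            ultimately have "anc T b a" using c anc_proper by blast
            then show False using nba by blast
          qed
          then show ?thesis using b'Q unfolding Qb_def Rsub_def by blast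
        qed
      qed
      have "b \<noteq> q"
      proof
        assume "b = q"
        then have "anc T b y" using less.prems unfolding conn_def by blast
        then show False using False by blast
      qed
      then obtain p where p: "onP T Q q p" "has_lc T Q p" "b = lc T p" using onP_prev bprop by blast
      have pv: "p \<in> verts T" using p onP_in Qv by blast
      have lcp: "lc T p \<in> verts T \<and> lc T p \<noteq> root T \<and> parent T (lc T p) = p" using lc_child[OF p(2) pv] .
      have "\<not> balanced T Q d p"
      proof
        assume "balanced T Q d p"
        then have "anc T b p" using bprop p by blast
        moreover have "anc T p b" using lc_anc[OF p(2) pv] p(3) by simp
        ultimately have "p = b" using anc_antisym by blast
        then show False using lcp p(3) parent_neq by metis
      qed
      then have "real (card Qb) > real (card Q) - d"
        unfolding balanced_def lcsize_def Qb_def using p by simp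
      moreover have "Qb \<subseteq> Q" unfolding Qb_def by (rule Rsub_sub)
      then have "card (Q - Qb) = card Q - card Qb" using fQ by (meson card_Diff_subset finite_subset)
      moreover have "card Qb \<le> card Q" using \<open>Qb \<subseteq> Q\<close> fQ by (rule card_mono[rotated])
      moreover have "card (comp T A y) \<le> card (Q - Qb)" using card_mono[OF finite_Diff[OF fQ] sub2] .
      ultimately show ?thesis unfolding A_def by (simp add: of_nat_diff)
    qed
  qed
qed

end

context vtree begin

lemma cv_exit:
  "cv T d Q z \<Longrightarrow> conn T Q q \<Longrightarrow> z \<noteq> root T \<Longrightarrow> parent T z \<in> Q \<Longrightarrow> \<not> cv T d Q (parent T z) \<Longrightarrow>
   has_lc T Q (parent T z) \<and> lc T (parent T z) = z \<and>
   (\<exists>s. onP T Q s (parent T z) \<and> (s = q \<or> (s \<noteq> root T \<and> cv T d Q (parent T s))))"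
proof (induction arbitrary: q rule: cv.induct)
  case (cv_here R b)
  have Rv: "R \<subseteq> verts T" using cv_here.prems unfolding conn_def by blast
  have rt: "rt T R = q" using conn_rt[OF cv_here.prems(1)] .
  have bp: "onP T R q b" using bfirst_Some[OF cv_here.hyps[unfolded rt] Rv] by blast
  have bv: "b \<in> verts T" using bp onP_in Rv by blast
  have "b \<noteq> q"
  proof
    assume "b = q"
    then have "anc T b (parent T b)" using cv_here.prems unfolding conn_def by blast
    then show False using not_anc_child bv cv_here.prems(2) by blast
  qed
  then obtain p where p: "onP T R q p" "has_lc T R p" "b = lc T p" using onP_prev bp by blast
  have pv: "p \<in> verts T" using p onP_in Rv by blast
  have "parent T b = p" using lc_child[OF p(2) pv] p(3) by simp
  then show ?case using p by auto
next
  case (cv_rec R b w x)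
  have Rv: "R \<subseteq> verts T" using cv_rec.prems unfolding conn_def by blast
  have rt: "rt T R = q" using conn_rt[OF cv_rec.prems(1)] .
  have wc: "w \<in> verts T \<and> w \<noteq> root T \<and> parent T w = b" using children_parent[OF cv_rec.hyps(3)] .
  have connw: "conn T (Rsub T R w) w" using conn_Rsub[OF cv_rec.prems(1) cv_rec.hyps(2)] .
  have cvb: "cv T d R b" using cv_rec.hyps(1) by (rule cv.cv_here)
  have RwR: "Rsub T R w \<subseteq> R" by (rule Rsub_sub)
  have xin: "x \<in> Rsub T R w" using cv_in[OF cv_rec.hyps(4)] RwR Rv by blast
  have "x \<noteq> w" using cv_rec.prems(4) wc cvb by blast
  then have "anc T w (parent T x)" using xin anc_proper unfolding Rsub_def by blast
  then have pxin: "parent T x \<in> Rsub T R w" using cv_rec.prems(3) unfolding Rsub_def by blast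
  have ncv: "\<not> cv T d (Rsub T R w) (parent T x)"
    using cv_rec.prems(4) cv.cv_rec[OF cv_rec.hyps(1-3)] by blast
  from cv_rec.IH[OF connw cv_rec.prems(2) pxin ncv] obtain s where
    h: "has_lc T (Rsub T R w) (parent T x)" "lc T (parent T x) = x"
       "onP T (Rsub T R w) s (parent T x)" "s = w \<or> (s \<noteq> root T \<and> cv T d (Rsub T R w) (parent T s))" by blast
  have "has_lc T R (parent T x)" using h(1) RwR unfolding has_lc_def by blast
  moreover have "onP T R s (parent T x)" using onP_mono[OF h(3) RwR] .
  moreover have "s \<noteq> root T \<and> cv T d R (parent T s)"
    using h(4) wc cvb cv.cv_rec[OF cv_rec.hyps(1-3)] by blast
  ultimately show ?case using h(2) by blast
qed

lemma Cset_cases: "Cset T k R = R \<or> Cset T k R = {x. cv T (real (card R) / real k) R x} \<union> {lend T R (rt T R), rt T R}"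
  unfolding Cset_def Let_def by auto

lemma Cset_sub: assumes "conn T R r" shows "Cset T k R \<subseteq> R"
proof -
  have Rv: "R \<subseteq> verts T" and rR: "r \<in> R" using assms unfolding conn_def by auto
  have rt: "rt T R = r" using conn_rt[OF assms] .
  have "lend T R r \<in> R" using lend_prop[OF Rv rR] onP_in by blast
  moreover have "{x. cv T d R x} \<subseteq> R" for d using cv_in Rv by blast
  ultimately show ?thesis using Cset_cases[of k R] rt rR by blast
qed

lemma rt_Cset: assumes "conn T R r" shows "r \<in> Cset T k R"
proof -
  have rR: "r \<in> R" using assms unfolding conn_def by auto
  have rt: "rt T R = r" using conn_rt[OF assms] .
  show ?thesis using Cset_cases[of k R] rt rR by blast
qed

lemma Cset_comp_size:
  assumes "conn T R r" "y \<in> R - Cset T k R" "k > 0"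
  shows "real k * real (card (comp T (R - Cset T k R) y)) < real (card R)"
proof -
  have big: "Cset T k R = {x. cv T (real (card R) / real k) R x} \<union> {lend T R (rt T R), rt T R}"
    using Cset_cases[of k R] assms(2) by blast
  define d where "d = real (card R) / real k"
  have "R - Cset T k R \<subseteq> R - {x. cv T d R x}" using big unfolding d_def by blast
  then have "comp T (R - Cset T k R) y \<subseteq> comp T (R - {x. cv T d R x}) y" by (rule comp_mono)
  moreover have ncv: "\<not> cv T d R y" using big assms(2) unfolding d_def by blast
  moreover have "finite (comp T (R - {x. cv T d R x}) y)"
  proof -
    have "comp T (R - {x. cv T d R x}) y \<subseteq> R - {x. cv T d R x}" by (rule comp_sub) (use assms(2) ncv in blast)
    moreover have "finite R" using assms(1) fin_sub unfolding conn_def by blast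
    ultimately show ?thesis using finite_subset by blast
  qed
  ultimately have "card (comp T (R - Cset T k R) y) \<le> card (comp T (R - {x. cv T d R x}) y)"
    using card_mono by blast
  moreover have "real (card (comp T (R - {x. cv T d R x}) y)) < d"
    using cv_comp_size[OF assms(1)] assms(2) ncv by blast
  ultimately have "real (card (comp T (R - Cset T k R) y)) < d" by linarith
  then show ?thesis unfolding d_def using assms(3) by (simp add: field_simps)
qed

end

definition crel :: "rtree \<Rightarrow> nat \<Rightarrow> nat set \<Rightarrow> nat set \<Rightarrow> bool" where
  "crel T k S R \<longleftrightarrow> S = R \<or> S \<inter> R = {} \<or> S \<subseteq> R - Cset T k R \<or> R \<subseteq> S - Cset T k S"

context vtree begin

lemma canon_conn: "canon T k R \<Longrightarrow> \<exists>r. conn T R r"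
proof (induction rule: canon.induct)
  case canon_T then show ?case using conn_verts by blast
next
  case (canon_comp R x)
  then obtain r where r: "conn T R r" by blast
  have "R - Cset T k R \<subseteq> verts T" using r unfolding conn_def by blast
  then show ?case using comp_conn canon_comp.hyps(2) by blast
qed

lemma canon_comp_sub: "canon T k R \<Longrightarrow> x \<in> R - Cset T k R \<Longrightarrow> comp T (R - Cset T k R) x \<subseteq> R - Cset T k R"
  using comp_sub by blast

lemma conn_comp_sub: "conn T R r \<Longrightarrow> R \<subseteq> A \<Longrightarrow> a \<in> R \<Longrightarrow> a \<in> comp T A y \<Longrightarrow> R \<subseteq> comp T A y"
proof -
  assume a: "conn T R r" "R \<subseteq> A" "a \<in> R" "a \<in> comp T A y"
  have "R \<subseteq> comp T A a" by (rule conn_in_comp[OF a(1-3)])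
  moreover have "comp T A a = comp T A y" by (rule comp_eq[OF a(4)])
  ultimately show ?thesis by simp
qed

lemma canon_in_root: "canon T k R \<Longrightarrow> R = verts T \<or> R \<subseteq> verts T - Cset T k (verts T)"
proof (induction rule: canon.induct)
  case canon_T then show ?case by simp
next
  case (canon_comp R x)
  have "comp T (R - Cset T k R) x \<subseteq> R" using comp_sub canon_comp.hyps(2) by blast
  moreover have "comp T (R - Cset T k R) x \<subseteq> R - Cset T k R" using comp_sub canon_comp.hyps(2) by blast
  ultimately show ?case using canon_comp.IH by blast
qed

lemma canon_ne: "canon T k R \<Longrightarrow> R \<noteq> {}"
  using canon_conn unfolding conn_def by blast

lemma canon_verts: "canon T k R \<Longrightarrow> R \<subseteq> verts T"
  using canon_conn unfolding conn_def by blast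

lemma canon_rt_C: "canon T k R \<Longrightarrow> R \<inter> Cset T k R \<noteq> {}"
  using canon_conn rt_Cset unfolding conn_def by blast

lemma canon_rel: "canon T k S \<Longrightarrow> canon T k R \<Longrightarrow> crel T k S R"
proof (induction arbitrary: R rule: canon.induct)
  case canon_T
  have "R = verts T \<or> R \<subseteq> verts T - Cset T k (verts T)" using canon_in_root[OF canon_T] .
  then show ?case unfolding crel_def by blast
next
  case (canon_comp Q x)
  note Qc = canon_comp.hyps
  note outerIH = canon_comp.IH
  define S where "S = comp T (Q - Cset T k Q) x"
  have SQ: "S \<subseteq> Q - Cset T k Q" unfolding S_def using comp_sub canon_comp.hyps(2) by blast
  have canS: "canon T k S" unfolding S_def using canon_comp.hyps by (rule canon.canon_comp)
  obtain sr where connS: "conn T S sr" using canon_conn[OF canS] by blast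
  have "canon T k R \<Longrightarrow> crel T k S R"
  proof (induction rule: canon.induct)
    case canon_T
    have "crel T k Q (verts T)" using outerIH canon.canon_T by blast
    moreover have "Q \<subseteq> verts T" using canon_verts[OF Qc(1)] .
    moreover have "Q \<noteq> {}" using canon_ne[OF Qc(1)] .
    moreover have "verts T \<inter> Cset T k (verts T) \<noteq> {}" using canon_rt_C[OF canon.canon_T] .
    ultimately have "S \<subseteq> verts T - Cset T k (verts T)"
      unfolding crel_def
    proof (elim disjE conjE)
      assume "Q = verts T" then show ?thesis using SQ by simp
    next
      assume "Q \<inter> verts T = {}" "Q \<subseteq> verts T" "Q \<noteq> {}" then show ?thesis by blast
    next
      assume "Q \<subseteq> verts T - Cset T k (verts T)" then show ?thesis using SQ by blast
    next
      assume a: "verts T \<subseteq> Q - Cset T k Q" "Q \<subseteq> verts T" "verts T \<inter> Cset T k (verts T) \<noteq> {}"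
      then have "Q = verts T" by blast
      then show ?thesis using a by blast
    qed
    then show ?case unfolding crel_def by blast
  next
    case (canon_comp P y)
    define R where "R = comp T (P - Cset T k P) y"
    have RP: "R \<subseteq> P - Cset T k P" unfolding R_def using comp_sub canon_comp.hyps(2) by blast
    have canR: "canon T k R" unfolding R_def using canon_comp.hyps by (rule canon.canon_comp)
    obtain rr where connR: "conn T R rr" using canon_conn[OF canR] by blast
    have Rne: "R \<noteq> {}" using canon_ne[OF canR] .
    have relQR: "crel T k Q R" using outerIH canR by blast
    have RPsub: "R \<subseteq> P" using RP by blast
    have innerIH: "crel T k S P" using canon_comp.IH .
    have "S = R \<or> S \<inter> R = {} \<or> S \<subseteq> R - Cset T k R \<or> R \<subseteq> S - Cset T k S"
      using relQR[unfolded crel_def]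
    proof (elim disjE)
      assume "Q = R" then show ?thesis using SQ by blast
    next
      assume "Q \<inter> R = {}" then show ?thesis using SQ by blast
    next
      assume "Q \<subseteq> R - Cset T k R" then show ?thesis using SQ by blast
    next
      assume RQ: "R \<subseteq> Q - Cset T k Q"
      show ?thesis
      proof (cases "R \<inter> S = {}")
        case True then show ?thesis by blast
      next
        case False
        then obtain a where a: "a \<in> R" "a \<in> S" by blast
        have RS: "R \<subseteq> S" using conn_comp_sub[OF connR RQ a(1)] a(2) unfolding S_def by blast
        from innerIH[unfolded crel_def] show ?thesis
        proof (elim disjE)
          assume "S = P" then show ?thesis using RP by blast
        next
          assume "S \<inter> P = {}" then show ?thesis using RS RPsub Rne by blast
        next
          assume SP: "S \<subseteq> P - Cset T k P"
          have "S \<subseteq> R" using conn_comp_sub[OF connS SP a(2)] a(1) unfolding R_def by blast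
          then show ?thesis using RS by blast
        next
          assume "P \<subseteq> S - Cset T k S" then show ?thesis using RPsub by blast
        qed
      qed
    qed
    then show ?case unfolding R_def crel_def .
  qed
  then show ?case using canon_comp.prems unfolding S_def by simp
qed


lemma canon_Cset_sub: "canon T k R \<Longrightarrow> Cset T k R \<subseteq> R"
  using canon_conn Cset_sub by blast

lemma Tof_eq: assumes "canon T k R" "u \<in> Cset T k R" shows "Tof T k u = R"
  unfolding Tof_def
proof (rule the_equality)
  show "canon T k R \<and> u \<in> Cset T k R" using assms by blast
  fix S assume S: "canon T k S \<and> u \<in> Cset T k S"
  have uR: "u \<in> R" using assms canon_Cset_sub by blast
  have uS: "u \<in> S" using S canon_Cset_sub by blast
  have "crel T k S R" using canon_rel S assms(1) by blast
  then show "S = R" unfolding crel_def using uR uS S assms(2) by blast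
qed

lemma Tof_ex: assumes "u \<in> verts T" shows "\<exists>R. canon T k R \<and> u \<in> Cset T k R"
proof -
  have "canon T k R \<Longrightarrow> u \<in> R \<Longrightarrow> \<exists>R'. canon T k R' \<and> u \<in> Cset T k R'" for R
  proof (induction "card R" arbitrary: R rule: less_induct)
    case less
    show ?case
    proof (cases "u \<in> Cset T k R")
      case True then show ?thesis using less by blast
    next
      case False
      define K where "K = comp T (R - Cset T k R) u"
      have uRC: "u \<in> R - Cset T k R" using False less by blast
      have canK: "canon T k K" unfolding K_def using less.prems(1) uRC by (rule canon.canon_comp)
      have KR: "K \<subseteq> R - Cset T k R" unfolding K_def using comp_sub uRC by blast
      have "K \<subset> R" using KR canon_rt_C[OF less.prems(1)] by blast
      moreover have "finite R" using canon_verts[OF less.prems(1)] fin_sub by blast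
      ultimately have "card K < card R" by (rule psubset_card_mono[rotated])
      moreover have "u \<in> K" unfolding K_def by (rule comp_refl)
      ultimately show ?thesis using less.hyps canK by blast
    qed
  qed
  then show ?thesis using canon.canon_T assms by blast
qed

lemma Tof_prop: assumes "u \<in> verts T" shows "canon T k (Tof T k u) \<and> u \<in> Cset T k (Tof T k u)"
  using Tof_ex[OF assms] Tof_eq by metis

lemma canon_strict_size:
  assumes "canon T k S" "canon T k R" "R \<subset> S" "k > 0"
  shows "real k * real (card R) < real (card S)"
proof -
  have "crel T k R S" using canon_rel assms(1,2) by blast
  moreover have "R \<noteq> {}" using canon_ne[OF assms(2)] .
  ultimately have RS: "R \<subseteq> S - Cset T k S" unfolding crel_def using assms(3) by blast
  obtain y where yR: "y \<in> R" using \<open>R \<noteq> {}\<close> by blast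
  obtain sr where connS: "conn T S sr" using canon_conn[OF assms(1)] by blast
  obtain rr where connR: "conn T R rr" using canon_conn[OF assms(2)] by blast
  have "R \<subseteq> comp T (S - Cset T k S) y" using conn_in_comp[OF connR RS yR] .
  moreover have "finite (comp T (S - Cset T k S) y)"
  proof -
    have "comp T (S - Cset T k S) y \<subseteq> S" using comp_sub RS yR by blast
    then show ?thesis using canon_verts[OF assms(1)] fin_sub finite_subset by blast
  qed
  ultimately have "card R \<le> card (comp T (S - Cset T k S) y)" by (rule card_mono[rotated])
  moreover have "real k * real (card (comp T (S - Cset T k S) y)) < real (card S)"
    using Cset_comp_size[OF connS _ assms(4)] RS yR by blast
  ultimately show ?thesis
  proof -
    assume a: "card R \<le> card (comp T (S - Cset T k S) y)"
      "real k * real (card (comp T (S - Cset T k S) y)) < real (card S)"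
    have "real k * real (card R) \<le> real k * real (card (comp T (S - Cset T k S) y))"
      using a(1) by (intro mult_left_mono) auto
    then show ?thesis using a(2) by linarith
  qed
qed

end

context vtree begin

lemma canon_exit: "canon T k R \<Longrightarrow> y \<in> R \<Longrightarrow> z \<in> children T y \<Longrightarrow> z \<notin> R \<Longrightarrow> y \<in> Cset T k R"
proof (induction arbitrary: y z rule: canon.induct)
  case canon_T
  then show ?case using children_parent by blast
next
  case (canon_comp P x)
  define R where "R = comp T (P - Cset T k P) x"
  have canP: "canon T k P" by fact
  have canR: "canon T k R" unfolding R_def using canon_comp.hyps by (rule canon.canon_comp)
  obtain p where connP: "conn T P p" using canon_conn[OF canP] by blast
  obtain r where connR: "conn T R r" using canon_conn[OF canR] by blast
  have Pv: "P \<subseteq> verts T" using connP unfolding conn_def by blast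
  have rtP: "rt T P = p" using conn_rt[OF connP] .
  have rtR: "rt T R = r" using conn_rt[OF connR] .
  have RP: "R \<subseteq> P - Cset T k P" unfolding R_def using comp_sub canon_comp.hyps(2) by blast
  have yR: "y \<in> R" using canon_comp.prems unfolding R_def by blast
  have zR: "z \<notin> R" using canon_comp.prems unfolding R_def by blast
  have zc: "z \<in> verts T \<and> z \<noteq> root T \<and> parent T z = y" using children_parent[OF canon_comp.prems(2)] .
  have yP: "y \<in> P - Cset T k P" using yR RP by blast
  have zP: "z \<in> P"
  proof (rule ccontr)
    assume "z \<notin> P"
    then have "y \<in> Cset T k P" using canon_comp.IH yP canon_comp.prems(2) by blast
    then show False using yP by blast
  qed
  have zC: "z \<in> Cset T k P"
  proof (rule ccontr)
    assume "z \<notin> Cset T k P"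
    then have "z \<in> P - Cset T k P" using zP by blast
    moreover have "tadj T y z" unfolding tadj_def using zc yP Pv by blast
    ultimately have "z \<in> R" using comp_step yR yP unfolding R_def by blast
    then show False using zR by blast
  qed
  have big: "Cset T k P = {x. cv T (real (card P) / real k) P x} \<union> {lend T P p, p}"
    using Cset_cases[of k P] canon_comp.hyps(2) rtP by blast
  have "z \<noteq> p"
  proof
    assume "z = p"
    then have "anc T z y" using connP yP unfolding conn_def by blast
    then show False using not_anc_child zc by blast
  qed
  have ex: "has_lc T P y \<and> lc T y = z \<and> (\<exists>s. onP T P s y \<and> (s = p \<or> (s \<noteq> root T \<and> parent T s \<in> Cset T k P)))"
  proof (cases "z = lend T P p")
    case True
    have "onP T P p z" using lend_prop[OF Pv] connP True unfolding conn_def by blast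
    then obtain q where q: "onP T P p q" "has_lc T P q" "z = lc T q" using onP_prev \<open>z \<noteq> p\<close> by blast
    have qv: "q \<in> verts T" using q onP_in Pv by blast
    have "q = y" using lc_child[OF q(2) qv] q(3) zc by simp
    then show ?thesis using q by blast
  next
    case False
    define d where "d = real (card P) / real k"
    have cvz: "cv T d P z" using zC big False \<open>z \<noteq> p\<close> unfolding d_def by blast
    have ncv: "\<not> cv T d P (parent T z)" using zc yP big unfolding d_def by blast
    have "has_lc T P (parent T z) \<and> lc T (parent T z) = z \<and>
      (\<exists>s. onP T P s (parent T z) \<and> (s = p \<or> (s \<noteq> root T \<and> cv T d P (parent T s))))"
      using cv_exit[OF cvz connP] zc yP ncv by blast
    then show ?thesis using zc big unfolding d_def by auto
  qed
  then obtain s where s: "onP T P s y" "s = p \<or> (s \<noteq> root T \<and> parent T s \<in> Cset T k P)"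
    and hl: "has_lc T P y" "lc T y = z" by blast
  have sy: "anc T s y" using onP_anc[OF s(1) Pv] .
  have ry: "anc T r y" using connR yR unfolding conn_def by blast
  have sr: "anc T s r"
  proof -
    have "anc T s r \<or> anc T r s" using anc_comparable[OF sy ry] .
    moreover have "anc T r s \<Longrightarrow> s \<noteq> r \<Longrightarrow> False"
    proof -
      assume a: "anc T r s" "s \<noteq> r"
      have sR: "s \<in> R" using conn_convex[OF sy connR yR a(1)] .
      have "parent T s \<in> R" using connR sR a(2) unfolding conn_def by blast
      then show False using s(2) sR RP rt_Cset[OF connP] by blast
    qed
    ultimately show ?thesis by blast
  qed
  have "onP T R r y"
    using onP_suffix[OF s(1) Pv sr ry] conn_convex[OF _ connR yR] by blast
  moreover have "\<not> has_lc T R y" using hl zR unfolding has_lc_def by blast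
  moreover have Rv: "R \<subseteq> verts T" using RP Pv by blast
  ultimately have "lend T R r = y" using lend_eq by blast
  then have "y \<in> Cset T k R" using Cset_cases[of k R] rtR yR by blast
  then show ?case unfolding R_def .
qed

end

context vtree begin

lemma deepest_prop:
  assumes "finite X" "X \<noteq> {}" "X \<subseteq> verts T" "\<And>a b. a \<in> X \<Longrightarrow> b \<in> X \<Longrightarrow> anc T a b \<or> anc T b a"
  shows "deepest T X \<in> X \<and> (\<forall>y\<in>X. anc T y (deepest T X))"
proof -
  have "Max (depth T ` X) \<in> depth T ` X" using Max_in[OF finite_imageI[OF assms(1)]] assms(2) by blast
  then obtain x where xX: "x \<in> X" and xm: "depth T x = Max (depth T ` X)" by auto
  have le: "\<And>y. y \<in> X \<Longrightarrow> depth T y \<le> depth T x" unfolding xm using Max_ge[OF finite_imageI[OF assms(1)]] by blast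
  have good: "x \<in> X \<and> (\<forall>y\<in>X. anc T y x)"
  proof (intro conjI ballI)
    show "x \<in> X" by fact
    fix y assume y: "y \<in> X"
    have "anc T y x \<or> anc T x y" using assms(4) y xX by blast
    moreover have "anc T x y \<Longrightarrow> x = y" using anc_depth_le anc_depth_eq le[OF y] by (meson le_antisym)
    ultimately show "anc T y x" by blast
  qed
  have "deepest T X = x" unfolding deepest_def
    by (rule the_equality) (use good anc_antisym in blast)+
  then show ?thesis using good by simp
qed

lemma highest_prop:
  assumes "finite X" "X \<noteq> {}" "X \<subseteq> verts T" "\<And>a b. a \<in> X \<Longrightarrow> b \<in> X \<Longrightarrow> anc T a b \<or> anc T b a"
  shows "highest T X \<in> X \<and> (\<forall>y\<in>X. anc T (highest T X) y)"
proof -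
  have "Min (depth T ` X) \<in> depth T ` X" using Min_in[OF finite_imageI[OF assms(1)]] assms(2) by blast
  then obtain x where xX: "x \<in> X" and xm: "depth T x = Min (depth T ` X)" by auto
  have le: "\<And>y. y \<in> X \<Longrightarrow> depth T x \<le> depth T y" unfolding xm using Min_le[OF finite_imageI[OF assms(1)]] by blast
  have good: "x \<in> X \<and> (\<forall>y\<in>X. anc T x y)"
  proof (intro conjI ballI)
    show "x \<in> X" by fact
    fix y assume y: "y \<in> X"
    have "anc T y x \<or> anc T x y" using assms(4) y xX by blast
    moreover have "anc T y x \<Longrightarrow> x = y" using anc_depth_le anc_depth_eq le[OF y] by (metis le_antisym)
    ultimately show "anc T x y" by blast
  qed
  have "highest T X = x" unfolding highest_def
    by (rule the_equality) (use good anc_antisym in blast)+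
  then show ?thesis using good by simp
qed

lemma child_toward_eq: assumes "c \<in> children T x" "anc T c v" shows "child_toward T x v = c"
  unfolding child_toward_def
proof (rule the_equality)
  show "c \<in> children T x \<and> anc T c v" using assms by blast
  fix c' assume c': "c' \<in> children T x \<and> anc T c' v"
  have cc: "c \<in> verts T \<and> c \<noteq> root T \<and> parent T c = x" "c' \<in> verts T \<and> c' \<noteq> root T \<and> parent T c' = x"
    using children_parent assms c' by blast+
  have "anc T c c' \<or> anc T c' c" using anc_comparable assms(2) c' by blast
  then show "c' = c"
  proof
    assume h: "anc T c c'"
    show ?thesis
    proof (rule ccontr)
      assume "c' \<noteq> c"
      then have "anc T c (parent T c')" using h anc_proper by metis
      then show False using cc not_anc_child by metis
    qed
  next
    assume h: "anc T c' c"
    show ?thesis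
    proof (rule ccontr)
      assume "c' \<noteq> c"
      then have "anc T c' (parent T c)" using h anc_proper by metis
      then show False using cc not_anc_child by metis
    qed
  qed
qed

lemma exit_path: "anc T c v \<Longrightarrow> c \<in> B \<Longrightarrow> v \<notin> B \<Longrightarrow> \<exists>p z. p \<in> B \<and> z \<notin> B \<and> z \<in> children T p \<and> anc T c p \<and> anc T z v"
proof (induction rule: anc.induct)
  case (anc_refl v) then show ?case by simp
next
  case (anc_step w x)
  show ?case
  proof (cases "parent T w \<in> B")
    case True
    have "w \<in> children T (parent T w)" unfolding children_def using anc_step by blast
    moreover have "anc T w w" using anc_step by (blast intro: anc.intros)
    ultimately show ?thesis using True anc_step by blast
  next
    case False
    then obtain p z where "p \<in> B \<and> z \<notin> B \<and> z \<in> children T p \<and> anc T x p \<and> anc T z (parent T w)"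
      using anc_step by blast
    moreover have "anc T z (parent T w) \<Longrightarrow> anc T z w" for z using anc_step by (blast intro: anc.intros)
    ultimately show ?thesis by blast
  qed
qed

lemma up_lemma:
  assumes canB: "canon T k B" and xB: "x \<in> B" and cB: "c \<notin> B" and adj: "tadj T x c" and k0: "k > 0"
  shows "Tof T k c \<supset> B \<and> real k * real (card B) < real (card (Tof T k c))"
proof -
  have cv: "c \<in> verts T" using adj unfolding tadj_def by blast
  define F where "F = {S. canon T k S \<and> B \<subseteq> S \<and> c \<in> S}"
  have VF: "verts T \<in> F" unfolding F_def using canon.canon_T canon_verts[OF canB] cv by blast
  have "\<exists>S. S \<in> F \<and> (\<forall>S'. S' \<in> F \<longrightarrow> card S \<le> card S')"
    using ex_has_least_nat[of "\<lambda>S. S \<in> F" "verts T" card] VF by blast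
  then obtain S where SF: "S \<in> F" and Smin: "\<And>S'. S' \<in> F \<Longrightarrow> card S \<le> card S'" by blast
  have canS: "canon T k S" and BS: "B \<subseteq> S" and cS: "c \<in> S" using SF unfolding F_def by auto
  have Bne: "B \<noteq> {}" using xB by blast
  have "crel T k B S" using canon_rel canB canS by blast
  then have BSC: "B \<subseteq> S - Cset T k S" unfolding crel_def using BS cS cB Bne by blast
  have cC: "c \<in> Cset T k S"
  proof (rule ccontr)
    assume "c \<notin> Cset T k S"
    then have cSC: "c \<in> S - Cset T k S" using cS by blast
    define K where "K = comp T (S - Cset T k S) c"
    have canK: "canon T k K" unfolding K_def using canS cSC by (rule canon.canon_comp)
    have KS: "K \<subseteq> S - Cset T k S" unfolding K_def using comp_sub cSC by blast
    have "x \<in> K" unfolding K_def using comp_step[OF comp_refl cSC] BSC xB tadj_sym[OF adj] by blast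
    obtain br where connB: "conn T B br" using canon_conn[OF canB] by blast
    have "B \<subseteq> K" using conn_comp_sub[OF connB BSC xB] \<open>x \<in> K\<close> unfolding K_def by blast
    moreover have "c \<in> K" unfolding K_def by (rule comp_refl)
    ultimately have "K \<in> F" unfolding F_def using canK by blast
    moreover have "K \<subset> S" using KS canon_rt_C[OF canS] by blast
    moreover have "finite S" using canon_verts[OF canS] fin_sub by blast
    ultimately have "card K < card S" using psubset_card_mono by blast
    then show False using Smin[OF \<open>K \<in> F\<close>] by linarith
  qed
  have "Tof T k c = S" using Tof_eq[OF canS cC] .
  moreover have "B \<subset> S" using BS cS cB by blast
  ultimately show ?thesis using canon_strict_size[OF canS canB _ k0] by simp
qed

end

context vtree begin

definition nxt :: "nat \<Rightarrow> nat \<Rightarrow> nat \<Rightarrow> nat" where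
  "nxt k v w = snd (route_step T k v w)"

lemma Cset_Tof_sub: "w \<in> verts T \<Longrightarrow> Cset T k (Tof T k w) \<subseteq> verts T"
  using Tof_prop canon_Cset_sub canon_verts by blast

lemma step_case1:
  assumes wv: "w \<in> verts T" and vv: "v \<in> verts T" and wav: "anc T w v" and ne: "w \<noteq> v"
    and ng: "\<not> Gadj T k w v" and k0: "k > 0"
  shows "anc T (nxt k v w) v \<and> nxt k v w \<in> verts T \<and>
    (v \<in> Tof T k w \<longrightarrow> v \<in> Tof T k (nxt k v w) \<and> real k * real (card (Tof T k (nxt k v w))) < real (card (Tof T k w))) \<and>
    (v \<notin> Tof T k w \<longrightarrow> real k * real (card (Tof T k w)) < real (card (Tof T k (nxt k v w))))"
proof -
  define B where "B = Tof T k w"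
  define C where "C = Cset T k B"
  have canB: "canon T k B" and wC: "w \<in> C" using Tof_prop[OF wv] unfolding B_def C_def by auto
  have CB: "C \<subseteq> B" unfolding C_def using canon_Cset_sub[OF canB] .
  have Bv: "B \<subseteq> verts T" using canon_verts[OF canB] .
  obtain b0 where connB: "conn T B b0" using canon_conn[OF canB] by blast
  define X where "X = {x \<in> C. anc T x v}"
  have fC: "finite C" using finite_subset[OF CB fin_sub[OF Bv]] .
  have fX: "finite X" unfolding X_def using fC by simp
  have wX: "w \<in> X" unfolding X_def using wC wav by blast
  have Xv: "X \<subseteq> verts T" unfolding X_def using CB Bv by blast
  have dp: "deepest T X \<in> X \<and> (\<forall>y\<in>X. anc T y (deepest T X))"
  proof (rule deepest_prop[OF fX _ Xv])
    show "X \<noteq> {}" using wX by blast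
    fix a b assume "a \<in> X" "b \<in> X"
    then have "anc T a v" "anc T b v" unfolding X_def by auto
    then show "anc T a b \<or> anc T b a" by (rule anc_comparable)
  qed
  define x where "x = deepest T X"
  have xX: "x \<in> X" and xdeep: "\<And>y. y \<in> X \<Longrightarrow> anc T y x" using dp unfolding x_def by auto
  have xC: "x \<in> C" and xav: "anc T x v" using xX unfolding X_def by auto
  have xne: "x \<noteq> v"
  proof
    assume "x = v"
    then have "Gadj T k w v" unfolding Gadj_def using ne canB wC xC unfolding C_def by blast
    then show False using ng by blast
  qed
  obtain c where cc: "c \<in> children T x" "anc T c v" using child_ex[OF xav xne] by blast
  have cprop: "c \<in> verts T \<and> c \<noteq> root T \<and> parent T c = x" using children_parent[OF cc(1)] .
  have rs: "route_step T k v w = (x, child_toward T x v)"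
    unfolding route_step_def Let_def if_not_P[OF ne] if_not_P[OF ng] if_P[OF wav] x_def X_def C_def B_def ..
  have nx: "nxt k v w = c" unfolding nxt_def rs using child_toward_eq[OF cc] by simp
  have wx: "anc T w x" using xdeep wX by blast
  have xc: "anc T x c" using cprop anc_parentI by metis
  have cnx: "c \<noteq> x" using cprop parent_neq by metis
  have cnC: "c \<notin> C"
  proof
    assume "c \<in> C"
    then have "anc T c x" using xdeep cc(2) unfolding X_def by blast
    then show False using xc cnx anc_antisym by blast
  qed
  have xB: "x \<in> B" using xC CB by blast
  have part_a: "v \<in> B \<Longrightarrow> v \<in> Tof T k c \<and> real k * real (card (Tof T k c)) < real (card B)"
  proof -
    assume vB: "v \<in> B"
    have b0c: "anc T b0 c" using connB xB xc anc_trans unfolding conn_def by blast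
    have cB: "c \<in> B" using conn_convex[OF cc(2) connB vB b0c] .
    have cBC: "c \<in> B - C" using cB cnC by blast
    define K where "K = comp T (B - C) c"
    have canK: "canon T k K" unfolding K_def C_def using canB cBC[unfolded C_def] by (rule canon.canon_comp)
    have KBC: "K \<subseteq> B - C" unfolding K_def using comp_sub cBC by blast
    have "v \<in> comp T (B - C) c"
    proof (rule path_in_comp[OF cc(2)], intro allI impI)
      fix p assume p: "anc T c p \<and> anc T p v"
      have "anc T b0 p" using b0c p anc_trans by blast
      then have "p \<in> B" using conn_convex[of p v B b0] p connB vB by blast
      moreover have "p \<notin> C"
      proof
        assume "p \<in> C"
        then have "anc T p x" using xdeep p unfolding X_def by blast
        moreover have "anc T x p" using xc p anc_trans by blast
        ultimately have "p = x" using anc_antisym by blast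
        then show False using p xc cnx anc_antisym by blast
      qed
      ultimately show "p \<in> B - C" by blast
    qed
    then have vK: "v \<in> K" unfolding K_def .
    obtain rk where connK: "conn T K rk" using canon_conn[OF canK] by blast
    have "rk = c"
    proof (rule ccontr)
      assume "rk \<noteq> c"
      moreover have "c \<in> K" unfolding K_def by (rule comp_refl)
      ultimately have "parent T c \<in> K" using connK unfolding conn_def by (metis (no_types))
      then show False using cprop xC KBC by blast
    qed
    then have "c \<in> Cset T k K" using rt_Cset[OF connK] by simp
    then have "Tof T k c = K" using Tof_eq[OF canK] by blast
    moreover have "K \<subset> B" using KBC wC wX CB by blast
    ultimately show ?thesis using canon_strict_size[OF canB canK _ k0] vK by simp
  qed
  have part_b: "v \<notin> B \<Longrightarrow> real k * real (card B) < real (card (Tof T k c))"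
  proof -
    assume vB: "v \<notin> B"
    have cB: "c \<notin> B"
    proof
      assume cB: "c \<in> B"
      obtain p z where pz: "p \<in> B" "z \<notin> B" "z \<in> children T p" "anc T c p" "anc T z v"
        using exit_path[OF cc(2) cB vB] by blast
      have pC: "p \<in> C" unfolding C_def using canon_exit[OF canB pz(1) pz(3) pz(2)] .
      have "anc T p z" using children_parent[OF pz(3)] anc_parentI by metis
      then have "p \<in> X" unfolding X_def using pC pz(5) anc_trans by blast
      then have "anc T p x" using xdeep by blast
      moreover have "anc T x p" using xc pz(4) anc_trans by blast
      ultimately have "p = x" using anc_antisym by blast
      then show False using pz(4) xc cnx anc_antisym by blast
    qed
    have "tadj T x c" unfolding tadj_def using cprop xB Bv by blast
    then show ?thesis using up_lemma[OF canB xB cB _ k0] by blast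
  qed
  show ?thesis using nx cc(2) cprop part_a part_b unfolding B_def by blast
qed


lemma step_case2:
  assumes wv: "w \<in> verts T" and vv: "v \<in> verts T" and vaw: "anc T v w" and ne: "w \<noteq> v"
    and ng: "\<not> Gadj T k w v" and k0: "k > 0"
  shows "anc T v (nxt k v w) \<and> nxt k v w \<in> verts T \<and>
    (v \<in> Tof T k w \<longrightarrow> v \<in> Tof T k (nxt k v w) \<and> real k * real (card (Tof T k (nxt k v w))) < real (card (Tof T k w))) \<and>
    (v \<notin> Tof T k w \<longrightarrow> real k * real (card (Tof T k w)) < real (card (Tof T k (nxt k v w))))"
proof -
  have nwv: "\<not> anc T w v" using vaw ne anc_antisym by blast
  define B where "B = Tof T k w"
  define C where "C = Cset T k B"
  have canB: "canon T k B" and wC: "w \<in> C" using Tof_prop[OF wv] unfolding B_def C_def by auto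
  have CB: "C \<subseteq> B" unfolding C_def using canon_Cset_sub[OF canB] .
  have Bv: "B \<subseteq> verts T" using canon_verts[OF canB] .
  obtain b0 where connB: "conn T B b0" using canon_conn[OF canB] by blast
  define X where "X = {x \<in> C. anc T v x \<and> anc T x w}"
  have fC: "finite C" using finite_subset[OF CB fin_sub[OF Bv]] .
  have fX: "finite X" unfolding X_def using fC by simp
  have wX: "w \<in> X" unfolding X_def using wC vaw wv by (blast intro: anc.intros)
  have Xv: "X \<subseteq> verts T" unfolding X_def using CB Bv by blast
  have hp: "highest T X \<in> X \<and> (\<forall>y\<in>X. anc T (highest T X) y)"
  proof (rule highest_prop[OF fX _ Xv])
    show "X \<noteq> {}" using wX by blast
    fix a b assume "a \<in> X" "b \<in> X"
    then have "anc T a w" "anc T b w" unfolding X_def by auto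
    then show "anc T a b \<or> anc T b a" by (rule anc_comparable)
  qed
  define x where "x = highest T X"
  have xX: "x \<in> X" and xhigh: "\<And>y. y \<in> X \<Longrightarrow> anc T x y" using hp unfolding x_def by auto
  have xC: "x \<in> C" and vx: "anc T v x" and xw: "anc T x w" using xX unfolding X_def by auto
  have xne: "x \<noteq> v"
  proof
    assume "x = v"
    then have "Gadj T k w v" unfolding Gadj_def using ne canB wC xC unfolding C_def by blast
    then show False using ng by blast
  qed
  have xr: "x \<noteq> root T" and vp: "anc T v (parent T x)" using anc_proper[OF vx xne[symmetric]] by auto
  define p where "p = parent T x"
  have xB: "x \<in> B" using xC CB by blast
  have xv: "x \<in> verts T" using xB Bv by blast
  have pv: "p \<in> verts T" unfolding p_def using parent_in xv xr by blast
  have px: "anc T p x" unfolding p_def using anc_parentI xv xr by blast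
  have pnx: "p \<noteq> x" unfolding p_def using parent_neq xv xr by blast
  have xchild: "x \<in> children T p" unfolding children_def p_def using xv xr by blast
  have rs: "route_step T k v w = (x, parent T x)"
    unfolding route_step_def Let_def if_not_P[OF ne] if_not_P[OF ng] if_not_P[OF nwv] if_P[OF vaw] x_def X_def C_def B_def ..
  have nx: "nxt k v w = p" unfolding nxt_def rs p_def by simp
  have pnC: "p \<notin> C"
  proof
    assume "p \<in> C"
    moreover have "anc T p w" using px xw anc_trans by blast
    ultimately have "p \<in> X" unfolding X_def using vp p_def by blast
    then have "anc T x p" using xhigh by blast
    then show False using px pnx anc_antisym by blast
  qed
  have part_a: "v \<in> B \<Longrightarrow> v \<in> Tof T k p \<and> real k * real (card (Tof T k p)) < real (card B)"
  proof -
    assume vB: "v \<in> B"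
    have b0v: "anc T b0 v" using connB vB unfolding conn_def by blast
    have b0p: "anc T b0 p" using b0v vp p_def anc_trans by blast
    have pB: "p \<in> B" using conn_convex[OF px connB xB b0p] .
    have pBC: "p \<in> B - C" using pB pnC by blast
    define K where "K = comp T (B - C) p"
    have canK: "canon T k K" unfolding K_def C_def using canB pBC[unfolded C_def] by (rule canon.canon_comp)
    have KBC: "K \<subseteq> B - C" unfolding K_def using comp_sub pBC by blast
    have "p \<in> comp T (B - C) v"
    proof (rule path_in_comp[OF vp[folded p_def]], intro allI impI)
      fix q assume q: "anc T v q \<and> anc T q p"
      have "anc T b0 q" using b0v q anc_trans by blast
      then have "q \<in> B" using conn_convex[of q x B b0] q px connB xB anc_trans by blast
      moreover have "q \<notin> C"
      proof
        assume "q \<in> C"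
        moreover have "anc T q w" using q px xw anc_trans by blast
        ultimately have "q \<in> X" unfolding X_def using q by blast
        then have "anc T x q" using xhigh by blast
        moreover have "anc T q x" using q px anc_trans by blast
        ultimately have "q = x" using anc_antisym by blast
        then show False using q px pnx anc_antisym by blast
      qed
      ultimately show "q \<in> B - C" by blast
    qed
    then have vK: "v \<in> K" unfolding K_def using comp_sym by blast
    have "x \<notin> K" using KBC xC by blast
    then have "p \<in> Cset T k K" using canon_exit[OF canK _ xchild] comp_refl unfolding K_def by blast
    then have "Tof T k p = K" using Tof_eq[OF canK] by blast
    moreover have "K \<subset> B" using KBC wC CB by blast
    ultimately show ?thesis using canon_strict_size[OF canB canK _ k0] vK by simp
  qed
  have part_b: "v \<notin> B \<Longrightarrow> real k * real (card B) < real (card (Tof T k p))"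
  proof -
    assume vB: "v \<notin> B"
    have r0w: "anc T b0 w" using connB wC CB unfolding conn_def by blast
    have "anc T v b0"
    proof -
      have "anc T v b0 \<or> anc T b0 v" using anc_comparable[OF vaw r0w] .
      moreover have "\<not> anc T b0 v" using conn_convex[OF vaw connB _] wC CB vB by blast
      ultimately show ?thesis by blast
    qed
    moreover have "b0 \<in> C" using rt_Cset[OF connB] unfolding C_def .
    ultimately have "b0 \<in> X" unfolding X_def using r0w by blast
    then have "anc T x b0" using xhigh by blast
    moreover have "anc T b0 x" using connB xB unfolding conn_def by blast
    ultimately have xb0: "x = b0" using anc_antisym by blast
    have "p \<notin> B"
    proof
      assume "p \<in> B"
      then have "anc T b0 p" using connB unfolding conn_def by blast
      then show False using xb0 px pnx anc_antisym by blast
    qed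
    moreover have "tadj T x p" unfolding tadj_def p_def using xv xr pv p_def by blast
    ultimately show ?thesis using up_lemma[OF canB xB _ _ k0] by blast
  qed
  show ?thesis unfolding nx using vp[folded p_def] pv part_a part_b unfolding B_def by blast
qed

end

context vtree begin

lemma Gadj_step: "w \<noteq> v \<Longrightarrow> Gadj T k w v \<Longrightarrow> nxt k v w = v"
  unfolding nxt_def route_step_def by simp

lemma self_step: "nxt k v v = v"
  unfolding nxt_def route_step_def by simp

lemma card_Tof_pos: "w \<in> verts T \<Longrightarrow> card (Tof T k w) \<ge> 1"
proof -
  assume wv: "w \<in> verts T"
  have "canon T k (Tof T k w)" "w \<in> Cset T k (Tof T k w)" using Tof_prop[OF wv] by auto
  moreover have "finite (Tof T k w)" using canon_verts fin_sub calculation(1) by blast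
  ultimately have "Tof T k w \<noteq> {}" "finite (Tof T k w)" using canon_ne by auto
  then show ?thesis by (simp add: Suc_le_eq card_gt_0_iff)
qed

lemma card_Tof_le: "w \<in> verts T \<Longrightarrow> card (Tof T k w) \<le> card (verts T)"
  using Tof_prop canon_verts card_mono fin by metis

lemma phase2:
  assumes k0: "k > 0"
  shows "w \<in> verts T \<Longrightarrow> v \<in> verts T \<Longrightarrow> (anc T w v \<or> anc T v w) \<Longrightarrow> v \<in> Tof T k w \<Longrightarrow>
    \<exists>N. (nxt k v ^^ N) w = v \<and> real k ^ N \<le> real k * real (card (Tof T k w))"
proof (induction "card (Tof T k w)" arbitrary: w rule: less_induct)
  case less
  have c1: "real (card (Tof T k w)) \<ge> 1" using card_Tof_pos[OF less.prems(1)] by simp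
  have k1: "real k \<ge> 1" using k0 by simp
  show ?case
  proof (cases "w = v")
    case True
    then show ?thesis using c1 k1 by (intro exI[of _ 0]) (auto intro: order_trans[OF _ mult_mono[of 1 _ 1]])
  next
    case ne: False
    show ?thesis
    proof (cases "Gadj T k w v")
      case True
      then have "(nxt k v ^^ 1) w = v" using Gadj_step ne by simp
      moreover have "real k ^ 1 \<le> real k * real (card (Tof T k w))" using c1 k1 by simp
      ultimately show ?thesis by blast
    next
      case False
      have st: "(anc T (nxt k v w) v \<or> anc T v (nxt k v w)) \<and> nxt k v w \<in> verts T \<and>
        v \<in> Tof T k (nxt k v w) \<and> real k * real (card (Tof T k (nxt k v w))) < real (card (Tof T k w))"
        using step_case1[OF less.prems(1,2) _ ne False k0] step_case2[OF less.prems(1,2) _ ne False k0]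
          less.prems(3,4) by blast
      define w' where "w' = nxt k v w"
      have lt: "real (card (Tof T k w')) < real (card (Tof T k w))"
        using st k1 unfolding w'_def
        by (smt (verit, best) mult_le_cancel_right1 of_nat_0_le_iff)
      then have "card (Tof T k w') < card (Tof T k w)" by simp
      then obtain N where N: "(nxt k v ^^ N) w' = v" "real k ^ N \<le> real k * real (card (Tof T k w'))"
        using less.hyps[of w'] st less.prems(2) unfolding w'_def by blast
      have "(nxt k v ^^ Suc N) w = v" using N(1) unfolding w'_def by (simp add: funpow_Suc_right del: funpow.simps)
      moreover have "real k ^ Suc N \<le> real k * real (card (Tof T k w))"
      proof -
        have "real k ^ Suc N = real k * real k ^ N" by simp
        also have "\<dots> \<le> real k * (real k * real (card (Tof T k w')))" using N(2) k1 by (intro mult_left_mono) auto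
        also have "\<dots> \<le> real k * real (card (Tof T k w))" using st k1 unfolding w'_def by (intro mult_left_mono) auto
        finally show ?thesis .
      qed
      ultimately show ?thesis by blast
    qed
  qed
qed


lemma phase1:
  assumes k0: "k > 0"
  shows "w \<in> verts T \<Longrightarrow> v \<in> verts T \<Longrightarrow> (anc T w v \<or> anc T v w) \<Longrightarrow> v \<notin> Tof T k w \<Longrightarrow>
    \<exists>N. (nxt k v ^^ N) w = v \<and> real k ^ N * real (card (Tof T k w)) \<le> (real k * real (card (verts T)))^2"
proof (induction "card (verts T) - card (Tof T k w)" arbitrary: w rule: less_induct)
  case less
  define n where "n = real (card (verts T))"
  have c1: "real (card (Tof T k w)) \<ge> 1" using card_Tof_pos[OF less.prems(1)] by simp
  have cn: "real (card (Tof T k w)) \<le> n" unfolding n_def using card_Tof_le[OF less.prems(1)] by simp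
  have k1: "real k \<ge> 1" using k0 by simp
  have n1: "n \<ge> 1" using c1 cn by simp
  have ne: "w \<noteq> v" using less.prems Tof_prop canon_Cset_sub by blast
  show ?case
  proof (cases "Gadj T k w v")
    case True
    then have "(nxt k v ^^ 1) w = v" using Gadj_step ne by simp
    moreover have "real k ^ 1 * real (card (Tof T k w)) \<le> (real k * n)^2"
    proof -
      have "real k ^ 1 * real (card (Tof T k w)) \<le> real k * n" using cn k1 by simp
      also have "\<dots> \<le> (real k * n) * (real k * n)" using k1 n1
        by (metis mult_1_right mult_left_mono mult_nonneg_nonneg one_le_mult_iff order_trans zero_le_one)
      finally show ?thesis by (simp add: power2_eq_square)
    qed
    ultimately show ?thesis unfolding n_def by blast
  next
    case False
    have st: "(anc T (nxt k v w) v \<or> anc T v (nxt k v w)) \<and> nxt k v w \<in> verts T \<and>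
        real k * real (card (Tof T k w)) < real (card (Tof T k (nxt k v w)))"
      using step_case1[OF less.prems(1,2) _ ne False k0] step_case2[OF less.prems(1,2) _ ne False k0]
          less.prems(3,4) by blast
    define w' where "w' = nxt k v w"
    have w'v: "w' \<in> verts T" using st unfolding w'_def by blast
    have lt: "real (card (Tof T k w)) < real (card (Tof T k w'))"
      using st k1 c1 unfolding w'_def
      by (smt (verit, best) mult_le_cancel_right1 of_nat_0_le_iff)
    have cn': "real (card (Tof T k w')) \<le> n" unfolding n_def using card_Tof_le[OF w'v] by simp
    have stw: "real k * real (card (Tof T k w)) \<le> real (card (Tof T k w'))" using st unfolding w'_def by simp
    show ?thesis
    proof (cases "v \<in> Tof T k w'")
      case True
      obtain N where N: "(nxt k v ^^ N) w' = v" "real k ^ N \<le> real k * real (card (Tof T k w'))"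
        using phase2[OF k0 w'v less.prems(2) _ True] st unfolding w'_def by blast
      have "(nxt k v ^^ Suc N) w = v" using N(1) unfolding w'_def by (simp add: funpow_Suc_right del: funpow.simps)
      moreover have "real k ^ Suc N * real (card (Tof T k w)) \<le> (real k * n)^2"
      proof -
        have "real k ^ Suc N * real (card (Tof T k w)) = real k ^ N * (real k * real (card (Tof T k w)))" by simp
        also have "\<dots> \<le> real k ^ N * real (card (Tof T k w'))" using stw by (intro mult_left_mono) auto
        also have "\<dots> \<le> (real k * real (card (Tof T k w'))) * real (card (Tof T k w'))" using N(2) by (intro mult_right_mono) auto
        also have "\<dots> \<le> (real k * n) * n" using cn' k1 by (intro mult_mono mult_left_mono) auto
        also have "\<dots> \<le> (real k * n) * (real k * n)" using k1 n1 by (intro mult_left_mono) auto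
        finally show ?thesis by (simp add: power2_eq_square)
      qed
      ultimately show ?thesis unfolding n_def by blast
    next
      case nv: False
      have "card (verts T) - card (Tof T k w') < card (verts T) - card (Tof T k w)"
        using lt card_Tof_le[where k=k, OF w'v] by simp
      then obtain N where N: "(nxt k v ^^ N) w' = v" "real k ^ N * real (card (Tof T k w')) \<le> (real k * n)^2"
        using less.hyps[of w'] st less.prems(2) nv unfolding w'_def n_def by blast
      have "(nxt k v ^^ Suc N) w = v" using N(1) unfolding w'_def by (simp add: funpow_Suc_right del: funpow.simps)
      moreover have "real k ^ Suc N * real (card (Tof T k w)) \<le> (real k * n)^2"
      proof -
        have "real k ^ Suc N * real (card (Tof T k w)) = real k ^ N * (real k * real (card (Tof T k w)))" by simp
        also have "\<dots> \<le> real k ^ N * real (card (Tof T k w'))" using stw by (intro mult_left_mono) auto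
        finally show ?thesis using N(2) by simp
      qed
      ultimately show ?thesis unfolding n_def by blast
    qed
  qed
qed

lemma route_bound:
  assumes k0: "k > 0" and uv: "u \<in> verts T" "v \<in> verts T" "anc T u v \<or> anc T v u"
  shows "\<exists>N. (nxt k v ^^ N) u = v \<and> real k ^ N \<le> (real k * real (card (verts T)))^2"
proof (cases "v \<in> Tof T k u")
  case True
  obtain N where N: "(nxt k v ^^ N) u = v" "real k ^ N \<le> real k * real (card (Tof T k u))"
    using phase2[OF k0 uv True] by blast
  have k1: "real k \<ge> 1" using k0 by simp
  have cn: "real (card (Tof T k u)) \<le> real (card (verts T))" using card_Tof_le[OF uv(1)] by simp
  have n1: "real (card (verts T)) \<ge> 1" using card_Tof_pos[where k=k, OF uv(1)] cn by simp
  have "real k * real (card (Tof T k u)) \<le> real k * real (card (verts T))" using cn k1 by (intro mult_left_mono) auto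
  also have "\<dots> \<le> (real k * real (card (verts T))) * (real k * real (card (verts T)))"
    using k1 n1 by (metis mult_1_right mult_left_mono mult_nonneg_nonneg one_le_mult_iff order_trans zero_le_one)
  finally show ?thesis using N by (auto simp: power2_eq_square)
next
  case False
  obtain N where N: "(nxt k v ^^ N) u = v" "real k ^ N * real (card (Tof T k u)) \<le> (real k * real (card (verts T)))^2"
    using phase1[OF k0 uv False] by blast
  have c1: "real (card (Tof T k u)) \<ge> 1" using card_Tof_pos[OF uv(1)] by simp
  have "real k ^ N \<le> real k ^ N * real (card (Tof T k u))" using c1 by (simp add: mult_le_cancel_left1)
  then show ?thesis using N by (meson order_trans)
qed

end

lemma final_arith:
  fixes N :: nat and k n :: real
  assumes k4: "k \<ge> 4" and n2: "n \<ge> 2" and h: "k ^ N \<le> (k * n)^2"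
  shows "2 * real N \<le> (4 / ln 2 + 4 / ln k) * ln n"
proof -
  have kp: "k > 0" "n > 0" using k4 n2 by auto
  have L: "ln k > 0" using k4 by simp
  have a: "ln 2 > (0::real)" by simp
  have M: "ln n \<ge> ln 2" using n2 by simp
  have "ln (k ^ N) \<le> ln ((k * n)^2)" using h kp by (simp del: ln_le_cancel_iff add: ln_le_cancel_iff)
  then have "real N * ln k \<le> 2 * (ln k + ln n)" using kp by (simp add: ln_realpow ln_mult)
  then have "real N \<le> 2 + 2 * ln n / ln k" using L by (simp add: field_simps)
  then have "2 * real N \<le> 4 + 4 * ln n / ln k" by simp
  moreover have "4 \<le> 4 * ln n / ln 2" using M a by (simp add: field_simps)
  ultimately have "2 * real N \<le> 4 * ln n / ln 2 + 4 * ln n / ln k" by linarith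
  then show ?thesis by (simp add: field_simps)
qed

theorem lemma14:
  shows "\<forall>k::nat. k \<ge> 4 \<longrightarrow> (\<exists>C::real. \<forall>T u v.
     is_tree T \<and> valid_lc T \<and> u \<in> verts T \<and> v \<in> verts T \<and> (anc T u v \<or> anc T v u) \<longrightarrow>
     (\<exists>N. route_pos T k u v N = v \<and>
          real (\<Sum>i<N. step_cost T k v (route_pos T k u v i)) \<le> C * ln (real (card (verts T)))))"
proof (intro allI impI)
  fix k :: nat assume k4: "k \<ge> 4"
  define C where "C = 4 / ln 2 + 4 / ln (real k)"
  have Cpos: "C \<ge> 0" unfolding C_def using k4 by simp
  show "\<exists>C::real. \<forall>T u v.
     is_tree T \<and> valid_lc T \<and> u \<in> verts T \<and> v \<in> verts T \<and> (anc T u v \<or> anc T v u) \<longrightarrow>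
     (\<exists>N. route_pos T k u v N = v \<and>
          real (\<Sum>i<N. step_cost T k v (route_pos T k u v i)) \<le> C * ln (real (card (verts T))))"
  proof (intro exI[of _ C] allI impI)
    fix T u v assume H: "is_tree T \<and> valid_lc T \<and> u \<in> verts T \<and> v \<in> verts T \<and> (anc T u v \<or> anc T v u)"
    interpret vtree T using H by unfold_locales auto
    have rp: "route_pos T k u v i = (nxt k v ^^ i) u" for i
    proof -
      have "(\<lambda>w. snd (route_step T k v w)) = nxt k v" by (rule ext) (simp add: nxt_def)
      then show ?thesis unfolding route_pos_def by simp
    qed
    have cost2: "step_cost T k v w \<le> 2" for w
      unfolding step_cost_def by (simp split: prod.split)
    have sumb: "(\<Sum>i<N. step_cost T k v (route_pos T k u v i)) \<le> 2 * N" for N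
      using sum_bounded_above[of "{..<N}" "\<lambda>i. step_cost T k v (route_pos T k u v i)" 2] cost2 by simp
    have fv: "finite (verts T)" by (rule fin)
    show "\<exists>N. route_pos T k u v N = v \<and>
          real (\<Sum>i<N. step_cost T k v (route_pos T k u v i)) \<le> C * ln (real (card (verts T)))"
    proof (cases "u = v")
      case True
      have "card (verts T) \<ge> 1" using H fv by (metis One_nat_def Suc_leI card_gt_0_iff empty_iff)
      then have "ln (real (card (verts T))) \<ge> 0" by simp
      then have "0 \<le> C * ln (real (card (verts T)))" using Cpos by simp
      then show ?thesis using True by (intro exI[of _ 0]) (simp add: route_pos_def)
    next
      case False
      have "{u, v} \<subseteq> verts T" using H by blast
      then have "card {u, v} \<le> card (verts T)" using fv card_mono by blast
      then have n2: "real (card (verts T)) \<ge> 2" using False by simp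
      obtain N where N: "(nxt k v ^^ N) u = v" "real k ^ N \<le> (real k * real (card (verts T)))^2"
        using route_bound[of k u v] k4 H by auto
      have "real (\<Sum>i<N. step_cost T k v (route_pos T k u v i)) \<le> 2 * real N"
        using sumb[of N] by (simp del: of_nat_sum add: of_nat_mono)
      also have "\<dots> \<le> C * ln (real (card (verts T)))"
        unfolding C_def by (rule final_arith) (use k4 n2 N(2) in auto)
      finally have ineq: "real (\<Sum>i<N. step_cost T k v (route_pos T k u v i)) \<le> C * ln (real (card (verts T)))" .
      have "route_pos T k u v N = v" using N(1) rp[of N] by simp
      then show ?thesis using ineq by blast
    qed
  qed
qed

end
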